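(* Let $\alpha$ be a composition of a non-negative integer $n$. Then \[\zeta_-(F_\alpha)=\frac{(-1)^{p_-(\alpha)}}{2^{2\lfloor n/2\rfloor}}\,C\bigl(p_-(\alpha),\lfloor n/2\rfloor-p_-(\alpha)\bigr),\] \[\zeta_+(F_\alpha)=\begin{cases}\dfrac{(-1)^{p_+(\alpha)}}{2^n}\,C\bigl(p_+(\alpha),n/2-p_+(\alpha)\bigr)&\text{if } n\text{ is even},\\ 0&\text{if } n\text{ is odd.}\end{cases}\]
   Context: $\Bbbk$ is a field of characteristic $\neq 2$. A composition $\alpha=(a_1,\ldots,a_k)$ of $n\ge0$ is a sequence of positive integers with sum $n$; $k(\alpha)=k$; $()$ is the empty composition. For compositions $\alpha,\beta$ of $n$, $\beta\ge\alpha$ means $\beta$ refines $\alpha$ ($\beta$ is obtained from $\alpha$ by splitting parts). Statistics: $p_-(\alpha)=\#\{i\ne k: a_i>1\}$; $p_+(\alpha)=1+\#\{i\ne 1,k: a_i>1\}$ if $k>1$, and $p_+(\alpha)=0$ if $k\le 1$. ${\mathcal{Q}Sym}$ is the Hopf algebra of quasi-symmetric functions over $\Bbbk$, graded and connected, with monomial basis $M_\alpha=\sum_{i_1<\cdots<i_k}x_{i_1}^{a_1}\cdots x_{i_k}^{a_k}$ ($M_{()}=1$), fundamental basis $F_\alpha=\sum_{\beta\ge\alpha}M_\beta$, ordinary product, coproduct $\Delta(M_\alpha)=\sum_{i=0}^kM_{(a_1,\ldots,a_i)}\otimes M_{(a_{i+1},\ldots,a_k)}$, counit $\epsilon(M_\alpha)=\delta_{\alpha,()}$.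 Convolution of functionals: $\rho\psi=m\circ(\rho\otimes\psi)\circ\Delta$. Characters (algebra morphisms ${\mathcal{Q}Sym}\to\Bbbk$) form a group under convolution. For a functional $\varphi$, $\bar\varphi(h)=(-1)^n\varphi(h)$ for $h$ homogeneous of degree $n$; $\varphi$ is even if $\bar\varphi=\varphi$ and odd if $\bar\varphi=\varphi^{-1}$. Every character factors uniquely as $\varphi=\varphi_+\varphi_-$ with $\varphi_+$ even and $\varphi_-$ odd characters. The universal character is $\zeta(f)=f(1,0,0,\ldots)$, so $\zeta(M_\alpha)=\zeta(F_\alpha)=1$ if $\alpha=()$ or $\alpha=(n)$ and $0$ otherwise; $\zeta_\pm$ are its even and odd parts. $C(m,n)=\frac{(2m)!(2n)!}{m!(m+n)!n!}$. *)

theory Defs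
  imports Main "HOL-Library.Multiset"
begin

definition is_comp :: "nat list \<Rightarrow> bool" where
  "is_comp \<alpha> \<longleftrightarrow> (\<forall>a\<in>set \<alpha>. 0 < a)"

definition is_comp_of :: "nat list \<Rightarrow> nat \<Rightarrow> bool" where
  "is_comp_of \<alpha> n \<longleftrightarrow> is_comp \<alpha> \<and> sum_list \<alpha> = n"

definition refinements :: "nat list \<Rightarrow> nat list set" where
  "refinements \<alpha> = {\<beta>. \<exists>\<beta>s. length \<beta>s = length \<alpha>
       \<and> (\<forall>i<length \<alpha>. is_comp_of (\<beta>s ! i) (\<alpha> ! i)) \<and> \<beta> = concat \<beta>s}"

text \<open>Statistics p_- and p_+ (parts indexed from 0 here, k = length).\<close>
definition p_minus :: "nat list \<Rightarrow> nat" where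
  "p_minus \<alpha> = card {i. i + 1 < length \<alpha> \<and> 1 < \<alpha> ! i}"

definition p_plus :: "nat list \<Rightarrow> nat" where
  "p_plus \<alpha> = (if 1 < length \<alpha>
      then 1 + card {i. 0 < i \<and> i + 1 < length \<alpha> \<and> 1 < \<alpha> ! i} else 0)"

text \<open>C(m,n) = (2m)!(2n)!/(m!(m+n)!n!), an integer (super Catalan number).\<close>
definition superC :: "nat \<Rightarrow> nat \<Rightarrow> nat" where
  "superC m n = (fact (2*m) * fact (2*n)) div (fact m * fact (m+n) * fact n)"

text \<open>Product in the monomial basis: M_alpha M_beta = sum over the quasi-shuffles gamma of
  alpha and beta (with multiplicity) of M_gamma.\<close>
fun qsh :: "nat list \<Rightarrow> nat list \<Rightarrow> nat list multiset" where
  "qsh [] ys = {#ys#}"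
| "qsh xs [] = {#xs#}"
| "qsh (a # xs) (b # ys) =
     image_mset ((#) a) (qsh xs (b # ys)) + image_mset ((#) b) (qsh (a # xs) ys)
     + image_mset ((#) (a + b)) (qsh xs ys)"

text \<open>A linear functional on QSym is represented by its values on the monomial basis
  (phi alpha = phi(M_alpha)); values at non-compositions are normalised to 0.\<close>
definition is_functional :: "(nat list \<Rightarrow> 'k::field) \<Rightarrow> bool" where
  "is_functional \<phi> \<longleftrightarrow> (\<forall>\<alpha>. \<not> is_comp \<alpha> \<longrightarrow> \<phi> \<alpha> = 0)"

definition is_char :: "(nat list \<Rightarrow> 'k::field) \<Rightarrow> bool" where
  "is_char \<phi> \<longleftrightarrow> \<phi> [] = 1 \<and>
     (\<forall>\<alpha> \<beta>. is_comp \<alpha> \<longrightarrow> is_comp \<beta> \<longrightarrow> \<phi> \<alpha> * \<phi> \<beta> = (\<Sum>\<gamma>\<in>#qsh \<alpha> \<beta>. \<phi> \<gamma>))"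

text \<open>Convolution via the deconcatenation coproduct, and the counit.\<close>
definition conv :: "(nat list \<Rightarrow> 'k::field) \<Rightarrow> (nat list \<Rightarrow> 'k) \<Rightarrow> nat list \<Rightarrow> 'k" where
  "conv \<rho> \<psi> \<alpha> = (\<Sum>i\<le>length \<alpha>. \<rho> (take i \<alpha>) * \<psi> (drop i \<alpha>))"

definition counit :: "nat list \<Rightarrow> 'k::field" where
  "counit \<alpha> = (if \<alpha> = [] then 1 else 0)"

definition bar :: "(nat list \<Rightarrow> 'k::field) \<Rightarrow> nat list \<Rightarrow> 'k" where
  "bar \<phi> \<alpha> = (-1) ^ sum_list \<alpha> * \<phi> \<alpha>"

definition is_even :: "(nat list \<Rightarrow> 'k::field) \<Rightarrow> bool" where
  "is_even \<phi> \<longleftrightarrow> (\<forall>\<alpha>. is_comp \<alpha> \<longrightarrow> bar \<phi> \<alpha> = \<phi> \<alpha>)"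

definition is_odd :: "(nat list \<Rightarrow> 'k::field) \<Rightarrow> bool" where
  "is_odd \<phi> \<longleftrightarrow> (\<forall>\<alpha>. is_comp \<alpha> \<longrightarrow>
      conv \<phi> (bar \<phi>) \<alpha> = counit \<alpha> \<and> conv (bar \<phi>) \<phi> \<alpha> = counit \<alpha>)"

definition zeta :: "nat list \<Rightarrow> 'k::field" where
  "zeta \<alpha> = (if is_comp \<alpha> \<and> length \<alpha> \<le> 1 then 1 else 0)"

text \<open>The even-odd factorisation phi = phi_+ phi_- (unique among normalised functionals).\<close>
definition even_odd_factors :: "(nat list \<Rightarrow> 'k::field) \<Rightarrow> (nat list \<Rightarrow> 'k) \<Rightarrow> (nat list \<Rightarrow> 'k) \<Rightarrow> bool" where
  "even_odd_factors \<phi> p m \<longleftrightarrow> is_functional p \<and> is_functional m \<and>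
     is_char p \<and> is_char m \<and> is_even p \<and> is_odd m \<and>
     (\<forall>\<alpha>. is_comp \<alpha> \<longrightarrow> \<phi> \<alpha> = conv p m \<alpha>)"

definition even_part :: "(nat list \<Rightarrow> 'k::field) \<Rightarrow> nat list \<Rightarrow> 'k" where
  "even_part \<phi> = fst (THE pm. even_odd_factors \<phi> (fst pm) (snd pm))"

definition odd_part :: "(nat list \<Rightarrow> 'k::field) \<Rightarrow> nat list \<Rightarrow> 'k" where
  "odd_part \<phi> = snd (THE pm. even_odd_factors \<phi> (fst pm) (snd pm))"

text \<open>Value of a functional on the fundamental basis element F_alpha.\<close>
definition onF :: "(nat list \<Rightarrow> 'k::field) \<Rightarrow> nat list \<Rightarrow> 'k" where
  "onF \<phi> \<alpha> = (\<Sum>\<beta>\<in>refinements \<alpha>. \<phi> \<beta>)"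

end

theory Submission
  imports Defs "HOL-Computational_Algebra.Formal_Power_Series" "HOL-Computational_Algebra.Polynomial"
begin


lemma conv_Nil[simp]: "conv f g [] = f [] * g []"
  by (simp add: conv_def)

lemma conv_Cons: "conv f g (a#xs) = f [] * g (a#xs) + conv (\<lambda>u. f (a#u)) g xs"
  unfolding conv_def by (simp add: sum.atMost_Suc_shift del: sum.atMost_Suc)

lemma conv_lin1: "conv (\<lambda>u. c * F u + G u) h xs = c * conv F h xs + conv G h xs"
  unfolding conv_def by (simp add: algebra_simps sum.distrib sum_distrib_left)

lemma conv_lin2: "conv h (\<lambda>u. c * F u + G u) xs = c * conv h F xs + conv h G xs"
  unfolding conv_def by (simp add: algebra_simps sum.distrib sum_distrib_left)

lemma conv_assoc: "conv (conv f g) h xs = conv f (conv g h) xs"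
proof (induction xs arbitrary: f)
  case Nil then show ?case by simp
next
  case (Cons a xs)
  have "conv (conv f g) h (a#xs) = f [] * g [] * h (a#xs) + conv (\<lambda>u. conv f g (a#u)) h xs"
    by (simp add: conv_Cons)
  also have "(\<lambda>u. conv f g (a#u)) = (\<lambda>u. f [] * g (a#u) + conv (\<lambda>v. f (a#v)) g u)"
    by (simp add: conv_Cons)
  also have "conv \<dots> h xs = f [] * conv (\<lambda>u. g (a#u)) h xs + conv (conv (\<lambda>v. f (a#v)) g) h xs"
    by (rule conv_lin1)
  also have "conv (conv (\<lambda>v. f (a#v)) g) h xs = conv (\<lambda>v. f (a#v)) (conv g h) xs"
    by (rule Cons.IH)
  finally show ?case by (simp add: conv_Cons algebra_simps)
qed

lemma counit_simps[simp]: "counit [] = 1" "counit (a#xs) = 0"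
  by (simp_all add: counit_def)

lemma conv_counit_left: "conv counit f xs = f xs"
proof (cases xs)
  case Nil then show ?thesis by simp
next
  case (Cons a ys)
  have "conv (\<lambda>u. counit (a#u)) f ys = 0" unfolding conv_def by simp
  then show ?thesis using Cons by (simp add: conv_Cons)
qed

lemma conv_counit_right: "conv f counit xs = f xs"
proof (induction xs arbitrary: f)
  case Nil then show ?case by simp
next
  case (Cons a xs) then show ?case by (simp add: conv_Cons)
qed

lemma conv_scal_counit: "conv (\<lambda>u. c * counit u) f xs = c * f xs"
proof -
  have "conv (\<lambda>u. c * counit u) f xs = c * conv counit f xs"
    unfolding conv_def by (simp add: sum_distrib_left mult.assoc)
  then show ?thesis by (simp add: conv_counit_left)
qed

lemma sum_list_take_drop: "sum_list (take i xs) + sum_list (drop i xs) = sum_list xs"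
  by (metis append_take_drop_id sum_list_append)

lemma bar_conv: "bar (conv f g) xs = conv (bar f) (bar g) xs"
proof -
  have "sum_list (drop i xs) + sum_list (take i xs) = sum_list xs" for i
    using sum_list_take_drop[of i xs] by simp
  then show ?thesis unfolding bar_def conv_def
    by (simp add: sum_distrib_left algebra_simps power_add[symmetric])
qed

lemma bar_bar[simp]: "bar (bar f) = f"
  by (rule ext) (simp add: bar_def power_add[symmetric] mult_2[symmetric] power_mult)

lemma bar_counit[simp]: "bar counit = counit"
  by (rule ext) (simp add: bar_def counit_def)

function linv :: "(nat list \<Rightarrow> 'k::field) \<Rightarrow> nat list \<Rightarrow> 'k" where
  "linv \<phi> [] = 1"
| "linv \<phi> (a#xs) = - (\<Sum>i\<in>{..<length (a#xs)}. linv \<phi> (take i (a#xs)) * \<phi> (drop i (a#xs)))"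
  by pat_completeness auto
termination
  by (relation "measure (\<lambda>(\<phi>,xs). length xs)") auto

lemma conv_split_last:
  assumes "xs \<noteq> []"
  shows "conv f g xs = (\<Sum>i<length xs. f (take i xs) * g (drop i xs)) + f xs * g []"
  unfolding conv_def by (simp add: lessThan_Suc_atMost[symmetric])

lemma conv_linv: assumes "\<phi> [] = 1" shows "conv (linv \<phi>) \<phi> xs = counit xs"
proof (cases xs)
  case Nil then show ?thesis using assms by simp
next
  case (Cons a ys)
  show ?thesis unfolding Cons conv_split_last[of "a#ys", simplified]
    using assms by (simp only: linv.simps) simp
qed

function sqr :: "(nat list \<Rightarrow> 'k::field) \<Rightarrow> nat list \<Rightarrow> 'k" where
  "sqr \<chi> [] = 1"
| "sqr \<chi> (a#xs) = (\<chi> (a#xs) - (\<Sum>i\<in>{1..<length (a#xs)}. sqr \<chi> (take i (a#xs)) * sqr \<chi> (drop i (a#xs)))) / 2"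
  by pat_completeness auto
termination
  by (relation "measure (\<lambda>(\<phi>,xs). length xs)") auto

lemma conv_split_ends:
  assumes "xs \<noteq> []"
  shows "conv f g xs = f [] * g xs + (\<Sum>i\<in>{1..<length xs}. f (take i xs) * g (drop i xs)) + f xs * g []"
proof -
  have "{..length xs} = insert 0 (insert (length xs) {1..<length xs})" using assms by auto
  then show ?thesis unfolding conv_def using assms by (simp add: algebra_simps)
qed

lemma conv_sqr: assumes "\<chi> [] = 1" "(2::'k::field) \<noteq> 0"
  shows "conv (sqr \<chi>) (sqr \<chi>) xs = (\<chi> xs :: 'k)"
proof (cases xs)
  case Nil then show ?thesis using assms by simp
next
  case (Cons a ys)
  let ?S = "(\<Sum>i\<in>{1..<length (a#ys)}. sqr \<chi> (take i (a#ys)) * sqr \<chi> (drop i (a#ys)))"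
  have e1: "conv (sqr \<chi>) (sqr \<chi>) (a#ys) = sqr \<chi> [] * sqr \<chi> (a#ys) + ?S + sqr \<chi> (a#ys) * sqr \<chi> []"
    by (rule conv_split_ends) simp
  have e2: "sqr \<chi> (a#ys) = (\<chi> (a#ys) - ?S) / 2" by (rule sqr.simps(2))
  have "conv (sqr \<chi>) (sqr \<chi>) (a#ys) = 2 * sqr \<chi> (a#ys) + ?S" using e1 by simp
  also have "2 * sqr \<chi> (a#ys) = \<chi> (a#ys) - ?S" using e2 assms(2) by simp
  finally show ?thesis using Cons by simp
qed

lemma linv_uniq:
  assumes "\<phi> [] = 1" "\<And>xs. conv X \<phi> xs = conv Y \<phi> xs"
  shows "X xs = Y xs"
proof (induction "length xs" arbitrary: xs rule: less_induct)
  case less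
  show ?case
  proof (cases "xs = []")
    case True then show ?thesis using assms(2)[of "[]"] assms(1) by simp
  next
    case False
    have "(\<Sum>i<length xs. X (take i xs) * \<phi> (drop i xs)) = (\<Sum>i<length xs. Y (take i xs) * \<phi> (drop i xs))"
      by (rule sum.cong) (auto intro: less)
    then show ?thesis using assms(2)[of xs] conv_split_last[OF False, of X \<phi>] conv_split_last[OF False, of Y \<phi>] assms(1)
      by simp
  qed
qed

lemma sqr_uniq:
  assumes "X [] = 1" "Y [] = 1" "(2::'k::field) \<noteq> 0" "\<And>xs. conv X X xs = conv Y Y xs"
  shows "X xs = (Y xs :: 'k)"
proof (induction "length xs" arbitrary: xs rule: less_induct)
  case less
  show ?case
  proof (cases "xs = []")
    case True then show ?thesis using assms by simp
  next
    case False
    have "(\<Sum>i\<in>{1..<length xs}. X (take i xs) * X (drop i xs)) = (\<Sum>i\<in>{1..<length xs}. Y (take i xs) * Y (drop i xs))"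
    proof (rule sum.cong)
      fix i assume i: "i \<in> {1..<length xs}"
      then have "X (take i xs) = Y (take i xs)" "X (drop i xs) = Y (drop i xs)"
        by (auto intro!: less)
      then show "X (take i xs) * X (drop i xs) = Y (take i xs) * Y (drop i xs)" by simp
    qed simp
    then have "2 * X xs = 2 * Y xs"
      using assms(4)[of xs] conv_split_ends[OF False, of X X] conv_split_ends[OF False, of Y Y] assms(1,2)
      by (simp add: algebra_simps)
    then show ?thesis using assms(3) by simp
  qed
qed

lemma linv_Nil[simp]: "linv \<phi> [] = 1" by simp

lemma conv_counit_left'[simp]: "conv counit f = f" by (rule ext) (rule conv_counit_left)
lemma conv_counit_right'[simp]: "conv f counit = f" by (rule ext) (rule conv_counit_right)
lemma conv_assoc': "conv (conv f g) h = conv f (conv g h)" by (rule ext) (rule conv_assoc)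
lemma conv_linv': "\<phi> [] = 1 \<Longrightarrow> conv (linv \<phi>) \<phi> = counit" by (rule ext) (rule conv_linv)

lemma conv_linv_right': assumes "\<phi> [] = 1" shows "conv \<phi> (linv \<phi>) = counit"
proof -
  let ?\<psi> = "linv \<phi>"
  let ?\<psi>' = "linv ?\<psi>"
  have 1: "conv ?\<psi>' ?\<psi> = counit" by (rule conv_linv') simp
  have "\<phi> = conv (conv ?\<psi>' ?\<psi>) \<phi>" by (simp add: 1)
  also have "\<dots> = ?\<psi>'" by (simp add: conv_assoc' conv_linv'[of \<phi>, OF assms])
  finally show ?thesis using 1 by simp
qed


lemma qsh_Nil2[simp]: "qsh xs [] = {#xs#}"
  by (cases xs) simp_all

lemma qsh_len: "\<gamma> \<in># qsh xs ys \<Longrightarrow> length xs \<le> length \<gamma> \<and> length ys \<le> length \<gamma>"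
  by (induction xs ys arbitrary: \<gamma> rule: qsh.induct) fastforce+

lemma qsh_sum: "\<gamma> \<in># qsh xs ys \<Longrightarrow> sum_list \<gamma> = sum_list xs + sum_list ys"
  by (induction xs ys arbitrary: \<gamma> rule: qsh.induct) fastforce+

lemma qsh_comp: "\<gamma> \<in># qsh xs ys \<Longrightarrow> is_comp xs \<Longrightarrow> is_comp ys \<Longrightarrow> is_comp \<gamma>"
  by (induction xs ys arbitrary: \<gamma> rule: qsh.induct) (fastforce simp: is_comp_def)+

definition mlt :: "(nat list \<Rightarrow> 'k::field) \<Rightarrow> nat list \<Rightarrow> nat list \<Rightarrow> 'k" where
  "mlt f xs ys = (\<Sum>\<gamma>\<in>#qsh xs ys. f \<gamma>)"

lemma mlt_Nil1[simp]: "mlt f [] ys = f ys" by (simp add: mlt_def)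
lemma mlt_Nil2[simp]: "mlt f xs [] = f xs" by (simp add: mlt_def)
lemma mlt_Cons: "mlt f (a#xs) (b#ys) = mlt (\<lambda>u. f (a#u)) xs (b#ys) + mlt (\<lambda>u. f (b#u)) (a#xs) ys
   + mlt (\<lambda>u. f ((a+b)#u)) xs ys"
  by (simp add: mlt_def image_mset.compositionality comp_def)

lemma mlt_add: "mlt (\<lambda>u. F u + G u) xs ys = mlt F xs ys + mlt G xs ys"
  by (simp add: mlt_def sum_mset.distrib)
lemma mlt_scal: "mlt (\<lambda>u. c * F u) xs ys = c * mlt F xs ys"
  by (simp add: mlt_def sum_mset_distrib_left)

definition conv2 :: "(nat list \<Rightarrow> nat list \<Rightarrow> 'k::field) \<Rightarrow> (nat list \<Rightarrow> nat list \<Rightarrow> 'k) \<Rightarrow> nat list \<Rightarrow> nat list \<Rightarrow> 'k" where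
  "conv2 F G xs ys = (\<Sum>i\<le>length xs. \<Sum>j\<le>length ys. F (take i xs) (take j ys) * G (drop i xs) (drop j ys))"

lemma conv2_Cons_Cons: "conv2 F G (a#xs) (b#ys) = F [] [] * G (a#xs) (b#ys)
  + (\<Sum>j\<le>length ys. F [] (b # take j ys) * G (a#xs) (drop j ys))
  + (\<Sum>i\<le>length xs. F (a # take i xs) [] * G (drop i xs) (b#ys))
  + (\<Sum>i\<le>length xs. \<Sum>j\<le>length ys. F (a # take i xs) (b # take j ys) * G (drop i xs) (drop j ys))"
  unfolding conv2_def by (simp add: sum.atMost_Suc_shift sum.distrib del: sum.atMost_Suc)

lemma conv2_Cons2: "conv2 F G xs (b#ys) =
    (\<Sum>i\<le>length xs. F (take i xs) [] * G (drop i xs) (b#ys))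
  + (\<Sum>i\<le>length xs. \<Sum>j\<le>length ys. F (take i xs) (b # take j ys) * G (drop i xs) (drop j ys))"
  unfolding conv2_def by (simp add: sum.atMost_Suc_shift sum.distrib del: sum.atMost_Suc)

lemma conv2_Cons1: "conv2 F G (a#xs) ys =
    (\<Sum>j\<le>length ys. F [] (take j ys) * G (a#xs) (drop j ys))
  + (\<Sum>i\<le>length xs. \<Sum>j\<le>length ys. F (a # take i xs) (take j ys) * G (drop i xs) (drop j ys))"
  unfolding conv2_def by (simp add: sum.atMost_Suc_shift sum.distrib del: sum.atMost_Suc)

lemma conv_Cons_fun: "(\<lambda>u. conv f g (c#u)) = (\<lambda>u. f [] * g (c#u) + conv (\<lambda>v. f (c#v)) g u)"
  by (simp add: conv_Cons)

lemma mlt_conv: "mlt (conv f g) xs ys = conv2 (mlt f) (mlt g) xs ys"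
proof (induction xs ys arbitrary: f rule: qsh.induct)
  case (1 ys) then show ?case by (simp add: conv2_def conv_def)
next
  case (2 a xs) then show ?case by (simp add: conv2_def conv_def)
next
  case (3 a xs b ys)
  have "mlt (conv f g) (a#xs) (b#ys) = f [] * mlt g (a#xs) (b#ys)
     + mlt (conv (\<lambda>v. f (a#v)) g) xs (b#ys) + mlt (conv (\<lambda>v. f (b#v)) g) (a#xs) ys
     + mlt (conv (\<lambda>v. f ((a+b)#v)) g) xs ys"
    by (simp only: mlt_Cons[of "conv f g"] conv_Cons_fun mlt_add mlt_scal mlt_Cons[of g]) (simp add: algebra_simps)
  also have "\<dots> = f [] * mlt g (a#xs) (b#ys)
     + conv2 (mlt (\<lambda>v. f (a#v))) (mlt g) xs (b#ys) + conv2 (mlt (\<lambda>v. f (b#v))) (mlt g) (a#xs) ys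
     + conv2 (mlt (\<lambda>v. f ((a+b)#v))) (mlt g) xs ys"
    by (simp only: "3.IH")
  also have "conv2 (mlt (\<lambda>v. f (a#v))) (mlt g) xs (b#ys) =
    (\<Sum>i\<le>length xs. f (a # take i xs) * mlt g (drop i xs) (b#ys))
  + (\<Sum>i\<le>length xs. \<Sum>j\<le>length ys. mlt (\<lambda>v. f (a#v)) (take i xs) (b # take j ys) * mlt g (drop i xs) (drop j ys))"
    by (simp only: conv2_Cons2) simp
  also have "conv2 (mlt (\<lambda>v. f (b#v))) (mlt g) (a#xs) ys =
    (\<Sum>j\<le>length ys. f (b # take j ys) * mlt g (a#xs) (drop j ys))
  + (\<Sum>i\<le>length xs. \<Sum>j\<le>length ys. mlt (\<lambda>v. f (b#v)) (a # take i xs) (take j ys) * mlt g (drop i xs) (drop j ys))"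
    by (simp only: conv2_Cons1) simp
  also have "conv2 (mlt f) (mlt g) (a#xs) (b#ys) = f [] * mlt g (a#xs) (b#ys)
  + (\<Sum>j\<le>length ys. f (b # take j ys) * mlt g (a#xs) (drop j ys))
  + (\<Sum>i\<le>length xs. f (a # take i xs) * mlt g (drop i xs) (b#ys))
  + (\<Sum>i\<le>length xs. \<Sum>j\<le>length ys. (mlt (\<lambda>v. f (a#v)) (take i xs) (b # take j ys)
       + mlt (\<lambda>v. f (b#v)) (a # take i xs) (take j ys) + mlt (\<lambda>v. f ((a+b)#v)) (take i xs) (take j ys))
      * mlt g (drop i xs) (drop j ys))"
    by (simp only: conv2_Cons_Cons mlt_Cons[of f]) simp
  ultimately show ?case
    by (simp add: conv2_def sum.distrib algebra_simps)
qed

lemma is_comp_Nil[simp]: "is_comp []" by (simp add: is_comp_def)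
lemma is_comp_Cons[simp]: "is_comp (a#xs) \<longleftrightarrow> 0 < a \<and> is_comp xs" by (simp add: is_comp_def)
lemma is_comp_append[simp]: "is_comp (xs @ ys) \<longleftrightarrow> is_comp xs \<and> is_comp ys" by (auto simp add: is_comp_def)
lemma is_comp_take: "is_comp xs \<Longrightarrow> is_comp (take i xs)"
  by (auto simp: is_comp_def dest: in_set_takeD)
lemma is_comp_drop: "is_comp xs \<Longrightarrow> is_comp (drop i xs)"
  by (auto simp: is_comp_def dest: in_set_dropD)

lemma conv2_tens: "conv2 (\<lambda>x y. f1 x * f2 y) (\<lambda>x y. g1 x * g2 y) xs ys = conv f1 g1 xs * conv f2 g2 ys"
  unfolding conv2_def conv_def sum_product by (rule sum.cong, simp, rule sum.cong) (simp_all add: algebra_simps)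

lemma conv2_cong_comp:
  assumes "\<And>x y. is_comp x \<Longrightarrow> is_comp y \<Longrightarrow> F x y = F' x y"
    "\<And>x y. is_comp x \<Longrightarrow> is_comp y \<Longrightarrow> G x y = G' x y"
    "is_comp xs" "is_comp ys"
  shows "conv2 F G xs ys = conv2 F' G' xs ys"
  unfolding conv2_def using assms by (intro sum.cong refl) (simp add: is_comp_take is_comp_drop)

lemma conv2_split_top: "conv2 F G xs ys = F xs ys * G [] [] +
   (\<Sum>p\<in>({..length xs} \<times> {..length ys}) - {(length xs, length ys)}.
      F (take (fst p) xs) (take (snd p) ys) * G (drop (fst p) xs) (drop (snd p) ys))"
proof -
  have "conv2 F G xs ys = (\<Sum>p\<in>{..length xs} \<times> {..length ys}.
      F (take (fst p) xs) (take (snd p) ys) * G (drop (fst p) xs) (drop (snd p) ys))"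
    unfolding conv2_def by (simp add: sum.cartesian_product split_def)
  also have "\<dots> = F xs ys * G [] [] + (\<Sum>p\<in>({..length xs} \<times> {..length ys}) - {(length xs, length ys)}.
      F (take (fst p) xs) (take (snd p) ys) * G (drop (fst p) xs) (drop (snd p) ys))"
    by (subst sum.remove[of _ "(length xs, length ys)"]) auto
  finally show ?thesis .
qed

lemma conv2_split_ends: assumes "xs \<noteq> [] \<or> ys \<noteq> []"
  shows "conv2 F G xs ys = F [] [] * G xs ys + F xs ys * G [] [] +
   (\<Sum>p\<in>({..length xs} \<times> {..length ys}) - {(length xs, length ys)} - {(0,0)}.
      F (take (fst p) xs) (take (snd p) ys) * G (drop (fst p) xs) (drop (snd p) ys))"
proof -
  have "(\<Sum>p\<in>({..length xs} \<times> {..length ys}) - {(length xs, length ys)}.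
      F (take (fst p) xs) (take (snd p) ys) * G (drop (fst p) xs) (drop (snd p) ys)) =
      F [] [] * G xs ys + (\<Sum>p\<in>({..length xs} \<times> {..length ys}) - {(length xs, length ys)} - {(0,0)}.
      F (take (fst p) xs) (take (snd p) ys) * G (drop (fst p) xs) (drop (snd p) ys))"
    using assms by (subst sum.remove[of _ "(0,0)"]) auto
  then show ?thesis by (simp add: conv2_split_top algebra_simps)
qed

lemma linv2_uniq:
  assumes "Y [] [] = 1" "\<And>x y. is_comp x \<Longrightarrow> is_comp y \<Longrightarrow> conv2 X Y x y = conv2 X' Y x y"
    "is_comp xs" "is_comp ys"
  shows "X xs ys = X' xs ys"
  using assms(3,4)
proof (induction "length xs + length ys" arbitrary: xs ys rule: less_induct)
  case less
  let ?S = "({..length xs} \<times> {..length ys}) - {(length xs, length ys)}"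
  have "(\<Sum>p\<in>?S. X (take (fst p) xs) (take (snd p) ys) * Y (drop (fst p) xs) (drop (snd p) ys))
      = (\<Sum>p\<in>?S. X' (take (fst p) xs) (take (snd p) ys) * Y (drop (fst p) xs) (drop (snd p) ys))"
  proof (rule sum.cong)
    fix p assume "p \<in> ?S"
    then have "length (take (fst p) xs) + length (take (snd p) ys) < length xs + length ys"
      by (cases p) auto
    then have "X (take (fst p) xs) (take (snd p) ys) = X' (take (fst p) xs) (take (snd p) ys)"
      using less by (intro less.hyps) (auto simp: is_comp_take)
    then show "X (take (fst p) xs) (take (snd p) ys) * Y (drop (fst p) xs) (drop (snd p) ys) =
      X' (take (fst p) xs) (take (snd p) ys) * Y (drop (fst p) xs) (drop (snd p) ys)" by simp
  qed simp
  then show ?case using assms(2)[OF less.prems] conv2_split_top[of X Y xs ys] conv2_split_top[of X' Y xs ys] assms(1)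
    by simp
qed

lemma sqr2_uniq:
  assumes "X [] [] = 1" "X' [] [] = 1" "(2::'k::field) \<noteq> 0"
    "\<And>x y. is_comp x \<Longrightarrow> is_comp y \<Longrightarrow> conv2 X X x y = conv2 X' X' x y"
    "is_comp xs" "is_comp ys"
  shows "X xs ys = (X' xs ys :: 'k)"
  using assms(5,6)
proof (induction "length xs + length ys" arbitrary: xs ys rule: less_induct)
  case less
  show ?case
  proof (cases "xs = [] \<and> ys = []")
    case True then show ?thesis using assms by simp
  next
    case False
    then have ne: "xs \<noteq> [] \<or> ys \<noteq> []" by simp
    let ?S = "({..length xs} \<times> {..length ys}) - {(length xs, length ys)} - {(0,0)}"
    have "(\<Sum>p\<in>?S. X (take (fst p) xs) (take (snd p) ys) * X (drop (fst p) xs) (drop (snd p) ys))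
        = (\<Sum>p\<in>?S. X' (take (fst p) xs) (take (snd p) ys) * X' (drop (fst p) xs) (drop (snd p) ys))"
    proof (rule sum.cong)
      fix p assume "p \<in> ?S"
      then have "length (take (fst p) xs) + length (take (snd p) ys) < length xs + length ys"
        "length (drop (fst p) xs) + length (drop (snd p) ys) < length xs + length ys"
        by (cases p, auto)+
      then have "X (take (fst p) xs) (take (snd p) ys) = X' (take (fst p) xs) (take (snd p) ys)"
        "X (drop (fst p) xs) (drop (snd p) ys) = X' (drop (fst p) xs) (drop (snd p) ys)"
        using less by (auto intro!: less.hyps simp: is_comp_take is_comp_drop)
      then show "X (take (fst p) xs) (take (snd p) ys) * X (drop (fst p) xs) (drop (snd p) ys) =
        X' (take (fst p) xs) (take (snd p) ys) * X' (drop (fst p) xs) (drop (snd p) ys)" by simp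
    qed simp
    then have "2 * X xs ys = 2 * X' xs ys"
      using assms(4)[OF less.prems] conv2_split_ends[OF ne, of X X] conv2_split_ends[OF ne, of X' X'] assms(1,2)
      by (simp add: algebra_simps)
    then show ?thesis using assms(3) by simp
  qed
qed

lemma is_char_mlt: "is_char \<phi> \<longleftrightarrow> \<phi> [] = 1 \<and> (\<forall>\<alpha> \<beta>. is_comp \<alpha> \<longrightarrow> is_comp \<beta> \<longrightarrow> \<phi> \<alpha> * \<phi> \<beta> = mlt \<phi> \<alpha> \<beta>)"
  by (simp add: is_char_def mlt_def)

lemma conv_char: assumes "is_char f" "is_char g" shows "is_char (conv f g)"
proof -
  have "conv f g \<alpha> * conv f g \<beta> = mlt (conv f g) \<alpha> \<beta>" if "is_comp \<alpha>" "is_comp \<beta>" for \<alpha> \<beta>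
  proof -
    have "conv f g \<alpha> * conv f g \<beta> = conv2 (\<lambda>x y. f x * f y) (\<lambda>x y. g x * g y) \<alpha> \<beta>"
      by (simp add: conv2_tens)
    also have "\<dots> = conv2 (mlt f) (mlt g) \<alpha> \<beta>"
      using assms that by (intro conv2_cong_comp) (auto simp: is_char_mlt)
    also have "\<dots> = mlt (conv f g) \<alpha> \<beta>" by (simp add: mlt_conv)
    finally show ?thesis .
  qed
  then show ?thesis using assms by (simp add: is_char_mlt)
qed

lemma sum_mset_zero: "(\<And>x. x \<in># M \<Longrightarrow> f x = 0) \<Longrightarrow> sum_mset (image_mset f M) = (0::'a::comm_monoid_add)"
  by (induction M) auto

lemma mlt_counit: "mlt (counit::nat list \<Rightarrow> 'k::field) xs ys = counit xs * counit ys"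
proof (cases "xs = [] \<or> ys = []")
  case True then show ?thesis by auto
next
  case False
  have "counit \<gamma> = (0::'k)" if "\<gamma> \<in># qsh xs ys" for \<gamma>
    using qsh_len[OF that] False by (cases \<gamma>) auto
  then have "mlt counit xs ys = (0::'k)" unfolding mlt_def by (rule sum_mset_zero)
  then show ?thesis using False by (auto simp: neq_Nil_conv)
qed

lemma linv_char: assumes "is_char \<phi>" shows "is_char (linv \<phi>)"
proof -
  let ?\<psi> = "linv \<phi>"
  have p1: "\<phi> [] = 1" using assms by (simp add: is_char_def)
  have "mlt ?\<psi> \<alpha> \<beta> = ?\<psi> \<alpha> * ?\<psi> \<beta>" if "is_comp \<alpha>" "is_comp \<beta>" for \<alpha> \<beta>
  proof (rule linv2_uniq[where Y = "mlt \<phi>"])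
    show "mlt \<phi> [] [] = 1" using p1 by simp
    fix x y :: "nat list" assume xy: "is_comp x" "is_comp y"
    have "conv2 (mlt ?\<psi>) (mlt \<phi>) x y = counit x * counit y"
      by (simp add: mlt_conv[symmetric] conv_linv'[of \<phi>, OF p1] mlt_counit)
    moreover have "conv2 (\<lambda>x y. ?\<psi> x * ?\<psi> y) (mlt \<phi>) x y = conv2 (\<lambda>x y. ?\<psi> x * ?\<psi> y) (\<lambda>x y. \<phi> x * \<phi> y) x y"
      using assms xy by (intro conv2_cong_comp) (auto simp: is_char_mlt)
    moreover have "\<dots> = counit x * counit y"
      by (simp add: conv2_tens conv_linv'[of \<phi>, OF p1])
    ultimately show "conv2 (mlt ?\<psi>) (mlt \<phi>) x y = conv2 (\<lambda>x y. ?\<psi> x * ?\<psi> y) (mlt \<phi>) x y" by simp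
  qed (use that in auto)
  then show ?thesis by (simp add: is_char_mlt)
qed

lemma sqr_char: assumes "is_char \<chi>" "(2::'k::field) \<noteq> 0" shows "is_char (sqr (\<chi> :: nat list \<Rightarrow> 'k))"
proof -
  let ?m = "sqr \<chi>"
  have p1: "\<chi> [] = 1" using assms by (simp add: is_char_def)
  have mm: "conv ?m ?m = \<chi>" by (rule ext) (rule conv_sqr[of \<chi>, OF p1 assms(2)])
  have "mlt ?m \<alpha> \<beta> = ?m \<alpha> * ?m \<beta>" if "is_comp \<alpha>" "is_comp \<beta>" for \<alpha> \<beta>
  proof (rule sqr2_uniq[OF _ _ assms(2)])
    fix x y :: "nat list" assume xy: "is_comp x" "is_comp y"
    have "conv2 (mlt ?m) (mlt ?m) x y = \<chi> x * \<chi> y"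
      using assms xy by (simp add: mlt_conv[symmetric] mm is_char_mlt)
    moreover have "conv2 (\<lambda>x y. ?m x * ?m y) (\<lambda>x y. ?m x * ?m y) x y = \<chi> x * \<chi> y"
      by (simp add: conv2_tens mm)
    ultimately show "conv2 (mlt ?m) (mlt ?m) x y = conv2 (\<lambda>x y. ?m x * ?m y) (\<lambda>x y. ?m x * ?m y) x y" by simp
  qed (use that in auto)
  then show ?thesis by (simp add: is_char_mlt)
qed

lemma bar_char: assumes "is_char \<phi>" shows "is_char (bar \<phi>)"
proof -
  have "bar \<phi> \<alpha> * bar \<phi> \<beta> = mlt (bar \<phi>) \<alpha> \<beta>" if "is_comp \<alpha>" "is_comp \<beta>" for \<alpha> \<beta>
  proof -
    have "mlt (bar \<phi>) \<alpha> \<beta> = (\<Sum>\<gamma>\<in>#qsh \<alpha> \<beta>. (-1) ^ (sum_list \<alpha> + sum_list \<beta>) * \<phi> \<gamma>)"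
      unfolding mlt_def bar_def by (rule arg_cong[where f=sum_mset], rule image_mset_cong) (simp add: qsh_sum)
    also have "\<dots> = (-1) ^ (sum_list \<alpha> + sum_list \<beta>) * mlt \<phi> \<alpha> \<beta>"
      by (simp add: mlt_def sum_mset_distrib_left)
    finally show ?thesis using assms that by (simp add: is_char_mlt bar_def power_add)
  qed
  then show ?thesis using assms by (simp add: is_char_mlt bar_def)
qed

lemma zeta_char: "is_char (zeta :: nat list \<Rightarrow> 'k::field)"
proof -
  have "(zeta \<alpha> :: 'k) * zeta \<beta> = mlt zeta \<alpha> \<beta>" if "is_comp \<alpha>" "is_comp \<beta>" for \<alpha> \<beta>
  proof (cases "\<alpha> = [] \<or> \<beta> = []")
    case True then show ?thesis using that by (auto simp: zeta_def)
  next
    case False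
    show ?thesis
    proof (cases "length \<alpha> = 1 \<and> length \<beta> = 1")
      case True
      then obtain a b where "\<alpha> = [a]" "\<beta> = [b]" by (auto simp: length_Suc_conv)
      then show ?thesis using that by (simp add: zeta_def mlt_def)
    next
      case False
      then have "2 \<le> length \<alpha> \<or> 2 \<le> length \<beta>" using \<open>\<not> (\<alpha> = [] \<or> \<beta> = [])\<close>
        by (cases \<alpha>; cases \<beta>) (auto simp: Suc_le_eq)
      then have l: "zeta \<alpha> * zeta \<beta> = (0::'k)" by (auto simp: zeta_def)
      have "zeta \<gamma> = (0::'k)" if "\<gamma> \<in># qsh \<alpha> \<beta>" for \<gamma>
        using qsh_len[OF that] \<open>2 \<le> length \<alpha> \<or> 2 \<le> length \<beta>\<close> by (auto simp: zeta_def)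
      then have m0: "mlt zeta \<alpha> \<beta> = (0::'k)" unfolding mlt_def by (rule sum_mset_zero)
      show ?thesis by (simp only: l m0)
    qed
  qed
  then show ?thesis by (simp add: is_char_mlt zeta_def)
qed


lemma bar_conv': "bar (conv f g) = conv (bar f) (bar g)" by (rule ext) (rule bar_conv)

lemma functional_conv: assumes "is_functional f" "is_functional g" shows "is_functional (conv f g)"
  unfolding is_functional_def
proof (intro allI impI)
  fix xs :: "nat list" assume nc: "\<not> is_comp xs"
  have "f (take i xs) * g (drop i xs) = 0" for i
  proof -
    have "\<not> is_comp (take i xs) \<or> \<not> is_comp (drop i xs)"
      using nc is_comp_append[of "take i xs" "drop i xs"] by simp
    then show ?thesis using assms by (auto simp: is_functional_def)
  qed
  then show "conv f g xs = 0" unfolding conv_def by (intro sum.neutral ballI)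
qed

lemma functional_bar: "is_functional f \<Longrightarrow> is_functional (bar f)"
  by (simp add: is_functional_def bar_def)

lemma functional_zeta: "is_functional zeta" by (simp add: is_functional_def zeta_def)
lemma functional_counit: "is_functional counit" by (simp add: is_functional_def counit_def)

lemma functional_linv: assumes "is_functional \<phi>" shows "is_functional (linv \<phi>)"
  unfolding is_functional_def
proof (intro allI impI)
  fix xs :: "nat list"
  show "\<not> is_comp xs \<Longrightarrow> linv \<phi> xs = 0"
  proof (induction "length xs" arbitrary: xs rule: less_induct)
    case less
    then obtain a ys where xs: "xs = a#ys" by (cases xs) auto
    have z: "linv \<phi> (take i xs) * \<phi> (drop i xs) = 0" if "i \<in> {..<length xs}" for i
    proof -
      have "\<not> is_comp (take i xs) \<or> \<not> is_comp (drop i xs)"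
        using less.prems is_comp_append[of "take i xs" "drop i xs"] by simp
      then show ?thesis using assms that less.hyps[of "take i xs"] by (auto simp: is_functional_def)
    qed
    have "(\<Sum>i\<in>{..<length xs}. linv \<phi> (take i xs) * \<phi> (drop i xs)) = 0"
      by (intro sum.neutral ballI z)
    then show ?case unfolding xs linv.simps(2) by simp
  qed
qed

lemma functional_sqr: assumes "is_functional \<chi>" shows "is_functional (sqr \<chi>)"
  unfolding is_functional_def
proof (intro allI impI)
  fix xs :: "nat list"
  show "\<not> is_comp xs \<Longrightarrow> sqr \<chi> xs = 0"
  proof (induction "length xs" arbitrary: xs rule: less_induct)
    case less
    then obtain a ys where xs: "xs = a#ys" by (cases xs) auto
    have z: "sqr \<chi> (take i xs) * sqr \<chi> (drop i xs) = 0" if "i \<in> {1..<length xs}" for i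
    proof -
      have "\<not> is_comp (take i xs) \<or> \<not> is_comp (drop i xs)"
        using less.prems is_comp_append[of "take i xs" "drop i xs"] by simp
      moreover have "length (take i xs) < length xs" "length (drop i xs) < length xs" using that by auto
      ultimately show ?thesis using less.hyps[of "take i xs"] less.hyps[of "drop i xs"] by auto
    qed
    have "(\<Sum>i\<in>{1..<length xs}. sqr \<chi> (take i xs) * sqr \<chi> (drop i xs)) = 0"
      by (intro sum.neutral ballI z)
    moreover have "\<chi> xs = 0" using assms less.prems by (simp add: is_functional_def)
    ultimately show ?case unfolding xs sqr.simps(2) by (simp add: xs)
  qed
qed

definition Zb :: "nat list \<Rightarrow> 'k::field" where "Zb = bar zeta"
definition Zbi :: "nat list \<Rightarrow> 'k::field" where "Zbi = linv Zb"
definition chi :: "nat list \<Rightarrow> 'k::field" where "chi = conv Zbi zeta"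
definition m0 :: "nat list \<Rightarrow> 'k::field" where "m0 = sqr chi"
definition p0 :: "nat list \<Rightarrow> 'k::field" where "p0 = conv Zb m0"

lemma Zb_Nil: "Zb [] = 1" by (simp add: Zb_def bar_def zeta_def)
lemma Zbi_l: "conv Zbi Zb = counit" unfolding Zbi_def by (rule conv_linv') (simp add: Zb_Nil)
lemma Zbi_r: "conv Zb Zbi = counit" unfolding Zbi_def by (rule conv_linv_right') (simp add: Zb_Nil)
lemma chi_Nil: "chi [] = 1" by (simp add: chi_def Zbi_def zeta_def)
lemma m0_Nil: "m0 [] = 1" by (simp add: m0_def)
lemma m0m0: "(2::'k::field) \<noteq> 0 \<Longrightarrow> conv m0 m0 = (chi :: nat list \<Rightarrow> 'k)"
  unfolding m0_def by (rule ext) (rule conv_sqr[of chi, OF chi_Nil])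

lemma chars:
  assumes "(2::'k::field) \<noteq> 0"
  shows "is_char (Zb :: nat list \<Rightarrow> 'k)" "is_char (Zbi :: nat list \<Rightarrow> 'k)" "is_char (chi :: nat list \<Rightarrow> 'k)"
     "is_char (m0 :: nat list \<Rightarrow> 'k)" "is_char (p0 :: nat list \<Rightarrow> 'k)"
proof -
  show 1: "is_char (Zb :: nat list \<Rightarrow> 'k)" unfolding Zb_def by (rule bar_char[OF zeta_char])
  show 2: "is_char (Zbi :: nat list \<Rightarrow> 'k)" unfolding Zbi_def by (rule linv_char[OF 1])
  show 3: "is_char (chi :: nat list \<Rightarrow> 'k)" unfolding chi_def by (rule conv_char[OF 2 zeta_char])
  show 4: "is_char (m0 :: nat list \<Rightarrow> 'k)" unfolding m0_def by (rule sqr_char[OF 3 assms])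
  show "is_char (p0 :: nat list \<Rightarrow> 'k)" unfolding p0_def by (rule conv_char[OF 1 4])
qed

lemma functionals:
  "is_functional (Zb :: nat list \<Rightarrow> 'k::field)" "is_functional (Zbi :: nat list \<Rightarrow> 'k)"
  "is_functional (chi :: nat list \<Rightarrow> 'k)" "is_functional (m0 :: nat list \<Rightarrow> 'k)"
  "is_functional (p0 :: nat list \<Rightarrow> 'k)"
proof -
  show 1: "is_functional (Zb :: nat list \<Rightarrow> 'k::field)" unfolding Zb_def by (rule functional_bar[OF functional_zeta])
  show 2: "is_functional (Zbi :: nat list \<Rightarrow> 'k::field)" unfolding Zbi_def by (rule functional_linv[OF 1])
  show 3: "is_functional (chi :: nat list \<Rightarrow> 'k::field)" unfolding chi_def by (rule functional_conv[OF 2 functional_zeta])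
  show 4: "is_functional (m0 :: nat list \<Rightarrow> 'k::field)" unfolding m0_def by (rule functional_sqr[OF 3])
  show "is_functional (p0 :: nat list \<Rightarrow> 'k::field)" unfolding p0_def by (rule functional_conv[OF 1 4])
qed

lemma existence:
  assumes two: "(2::'k::field) \<noteq> 0"
  shows "even_odd_factors (zeta :: nat list \<Rightarrow> 'k) p0 m0"
proof -
  let ?\<mu> = "linv (m0 :: nat list \<Rightarrow> 'k)"
  have mu_l: "conv ?\<mu> m0 = counit" by (rule conv_linv') (simp add: m0_Nil)
  have mu_r: "conv m0 ?\<mu> = counit" by (rule conv_linv_right') (simp add: m0_Nil)
  have mm: "conv m0 m0 = (chi :: nat list \<Rightarrow> 'k)" by (rule m0m0[OF two])
  define Zi :: "nat list \<Rightarrow> 'k" where "Zi = bar Zbi"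
  have Zi: "conv Zi zeta = counit"
  proof -
    have "bar (conv Zbi Zb) = (counit :: nat list \<Rightarrow> 'k)" by (simp add: Zbi_l)
    then show ?thesis by (simp add: bar_conv' Zi_def Zb_def)
  qed
  have "conv (conv ?\<mu> ?\<mu>) chi = conv ?\<mu> (conv (conv ?\<mu> m0) m0)"
    by (simp only: mm[symmetric] conv_assoc')
  also have "\<dots> = counit" by (simp only: mu_l conv_counit_left')
  finally have L1: "conv (conv ?\<mu> ?\<mu>) chi = counit" .
  have bchi: "bar chi = conv Zi Zb" by (simp add: chi_def bar_conv' Zi_def Zb_def)
  have L2: "conv (conv (bar m0) (bar m0)) (chi :: nat list \<Rightarrow> 'k) = counit"
  proof -
    have "conv (bar m0) (bar m0) = conv Zi Zb" by (simp add: bar_conv'[symmetric] mm bchi)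
    moreover have "conv (conv Zi Zb) chi = conv Zi (conv (conv Zb Zbi) zeta)"
      by (simp only: chi_def conv_assoc')
    moreover have "\<dots> = counit" by (simp only: Zbi_r conv_counit_left' Zi)
    ultimately show ?thesis by (simp only:)
  qed
  have bb: "conv (bar m0) (bar m0) xs = conv ?\<mu> ?\<mu> xs" for xs
  proof (rule linv_uniq[of chi])
    show "chi [] = (1::'k)" by (rule chi_Nil)
    fix xs show "conv (conv (bar m0) (bar m0)) chi xs = conv (conv ?\<mu> ?\<mu>) chi xs"
      by (simp only: L1 L2)
  qed
  have bm: "bar m0 = ?\<mu>"
  proof (rule ext, rule sqr_uniq[OF _ _ two])
    show "bar m0 [] = (1::'k)" by (simp add: bar_def m0_Nil)
    show "?\<mu> [] = 1" by simp
    fix xs show "conv (bar m0) (bar m0) xs = conv ?\<mu> ?\<mu> xs" by (rule bb)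
  qed
  have odd: "is_odd (m0 :: nat list \<Rightarrow> 'k)" unfolding is_odd_def by (simp only: bm mu_l mu_r simp_thms)
  have "conv (p0 :: nat list \<Rightarrow> 'k) m0 = conv Zb (conv m0 m0)" by (simp only: p0_def conv_assoc')
  also have "\<dots> = conv Zb chi" by (simp only: mm)
  also have "\<dots> = conv (conv Zb Zbi) zeta" by (simp only: chi_def conv_assoc')
  finally have "conv (p0 :: nat list \<Rightarrow> 'k) m0 = conv (conv Zb Zbi) zeta" .
  then have pm: "conv (p0 :: nat list \<Rightarrow> 'k) m0 = zeta" by (simp only: Zbi_r conv_counit_left')
  have "conv zeta ?\<mu> = conv p0 (conv m0 ?\<mu>)"
    by (simp only: pm[symmetric] conv_assoc')
  then have pz: "conv zeta ?\<mu> = p0" by (simp only: mu_r conv_counit_right')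
  have "bar (p0 :: nat list \<Rightarrow> 'k) = conv (bar Zb) (bar m0)" by (simp only: p0_def bar_conv')
  also have "\<dots> = conv zeta ?\<mu>" by (simp only: Zb_def bar_bar bm)
  finally have "bar (p0 :: nat list \<Rightarrow> 'k) = p0" by (simp only: pz)
  then have even: "is_even (p0 :: nat list \<Rightarrow> 'k)" by (simp add: is_even_def)
  show ?thesis unfolding even_odd_factors_def
    using functionals chars[OF two] odd even pm by auto
qed

lemma ext_comp: assumes "is_functional f" "is_functional g" "\<And>xs. is_comp xs \<Longrightarrow> f xs = g xs"
  shows "f = g"
proof (rule ext)
  fix x show "f x = g x" using assms by (cases "is_comp x") (auto simp: is_functional_def)
qed

lemma uniqueness:
  assumes two: "(2::'k::field) \<noteq> 0" and F: "even_odd_factors (zeta :: nat list \<Rightarrow> 'k) p m"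
  shows "p = p0 \<and> m = m0"
proof -
  have fp: "is_functional p" and fm: "is_functional m" and cm: "is_char m" and ep: "is_even p"
    and om: "is_odd m" and zc: "\<And>\<alpha>. is_comp \<alpha> \<Longrightarrow> zeta \<alpha> = conv p m \<alpha>"
    using F by (auto simp: even_odd_factors_def)
  have z: "zeta = conv p m"
    by (rule ext_comp[OF functional_zeta functional_conv[OF fp fm]]) (rule zc)
  have bp: "bar p = p"
    by (rule ext_comp[OF functional_bar[OF fp] fp]) (use ep in \<open>simp add: is_even_def\<close>)
  have o1: "conv (bar m) m = counit"
    by (rule ext_comp[OF functional_conv[OF functional_bar[OF fm] fm] functional_counit])
       (use om in \<open>simp add: is_odd_def\<close>)
  have "Zb = conv p (bar m)" by (simp add: Zb_def z bar_conv' bp)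
  then have "conv Zb m = conv (conv p (bar m)) m" by (simp only:)
  then have pz: "conv Zb m = p" by (simp only: conv_assoc' o1 conv_counit_right')
  have "zeta = conv (conv Zb m) m" by (simp only: z pz)
  then have zz: "zeta = conv Zb (conv m m)" by (simp only: conv_assoc')
  have "conv m m = conv (conv Zbi Zb) (conv m m)" by (simp only: Zbi_l conv_counit_left')
  also have "\<dots> = conv Zbi zeta" by (simp only: conv_assoc' zz)
  finally have "conv m m = (chi :: nat list \<Rightarrow> 'k)" by (simp only: chi_def)
  then have mmc: "conv m m = conv m0 m0" by (simp only: m0m0[OF two])
  have "m = m0"
  proof (rule ext, rule sqr_uniq[OF _ _ two])
    show "m [] = 1" using cm by (simp add: is_char_def)
    show "m0 [] = (1::'k)" by (rule m0_Nil)
    fix xs show "conv m m xs = conv m0 m0 xs" by (simp only: mmc)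
  qed
  then show ?thesis using pz by (simp only: p0_def simp_thms)
qed

lemma parts:
  assumes two: "(2::'k::field) \<noteq> 0"
  shows "odd_part (zeta :: nat list \<Rightarrow> 'k) = m0" "even_part (zeta :: nat list \<Rightarrow> 'k) = p0"
proof -
  have "(THE pm. even_odd_factors (zeta :: nat list \<Rightarrow> 'k) (fst pm) (snd pm)) = (p0, m0)"
    by (rule the_equality) (use existence[OF two] uniqueness[OF two] in auto)
  then show "odd_part (zeta :: nat list \<Rightarrow> 'k) = m0" "even_part (zeta :: nat list \<Rightarrow> 'k) = p0"
    by (simp_all add: odd_part_def even_part_def)
qed


lemma prod_half_aux0:
  fixes F G s x r :: real assumes "G \<noteq> 0" "x \<noteq> 0" "r \<ge> 0"
  shows "s * F / (x * G) * (-(1/2) - r) = (-s) * ((2*r+2)*(2*r+1)*F) / ((4*x) * ((r+1)*G))"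
proof -
  have "r + 1 \<noteq> 0" using assms by linarith
  have "(-s) * ((2*r+2)*(2*r+1)*F) / ((4*x) * ((r+1)*G)) = ((r+1) * ((-s) * (2*(2*r+1)*F))) / ((r+1) * (4*x*G))"
    by (simp add: algebra_simps)
  also have "\<dots> = ((-s) * (2*(2*r+1)*F)) / (4*x*G)"
    using \<open>r + 1 \<noteq> 0\<close> by (rule nonzero_mult_divide_mult_cancel_left)
  also have "\<dots> = (-s) * ((2*r+1)*F) / ((2*x) * G)"
    using assms by (simp add: field_simps)
  finally have "(-s) * ((2*r+2)*(2*r+1)*F) / ((4*x) * ((r+1)*G)) = (-s) * ((2*r+1)*F) / ((2*x) * G)" .
  also have "\<dots> = s * F / (x * G) * (-(1/2) - r)"
    using assms by (simp add: field_simps)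
  finally show ?thesis by simp
qed

lemma prod_half_aux:
  fixes F G :: real assumes "G \<noteq> 0"
  shows "(-1)^k * F / (4^k * G) * (-(1/2) - real k) = (-1)^Suc k * ((2*real k+2)*(2*real k+1)*F) / (4^Suc k * ((real k+1)*G))"
  using prod_half_aux0[OF assms, of "4^k" "real k" "(-1)^k" F] by simp

lemma prod_half: "(\<Prod>i = 0..<k. (-(1/2)::real) - of_nat i) = (-1)^k * fact (2*k) / (4^k * fact k)"
proof (induction k)
  case 0 then show ?case by simp
next
  case (Suc k)
  have f1: "(fact (2 * Suc k) :: real) = (2*real k+2)*(2*real k+1)*fact(2*k)"
    by (simp add: algebra_simps)
  have f2: "(fact (Suc k) :: real) = (real k+1)*fact k" by simp
  have "(\<Prod>i = 0..<Suc k. (-(1/2)::real) - of_nat i) = (-1)^k * fact (2*k) / (4^k * fact k) * (-(1/2) - k)"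
    using Suc by simp
  also have "\<dots> = (-1)^Suc k * fact (2*Suc k) / (4^Suc k * fact (Suc k))"
    unfolding f1 f2 by (rule prod_half_aux) simp
  finally show ?case .
qed

lemma gchoose_half_aux:
  fixes g F G B :: real assumes "G \<noteq> 0" "G * g = s * F / (4^k * G)" "B = F / (G * G)"
  shows "g = s * B / 4^k"
proof -
  have "G * G * (g * 4^k) = G * G * (s * B)"
    using assms by (simp add: field_simps)
  then have "g * 4^k = s * B" using assms(1) by simp
  then show ?thesis by (simp add: field_simps)
qed

lemma gchoose_half: "((-(1/2)::real) gchoose k) = (-1)^k * of_nat ((2*k) choose k) / 4^k"
proof (rule gchoose_half_aux)
  show "fact k * ((-(1/2)::real) gchoose k) = (-1)^k * fact (2*k) / (4^k * fact k)"
    by (simp add: gbinomial_mult_fact prod_half)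
  show "real ((2*k) choose k) = fact (2*k) / (fact k * fact k)"
    by (simp add: binomial_fact)
qed simp

lemma central_real: "(\<Sum>i\<le>m. real ((2*i) choose i) * real ((2*(m-i)) choose (m-i)) / 4^m) = 1"
proof -
  have "(\<Sum>k = 0..m. ((-(1/2)::real) gchoose k) * ((-(1/2)) gchoose (m - k))) = (-1) gchoose m"
    using gbinomial_Vandermonde[of "-(1/2)::real" "-(1/2)" m] by simp
  also have "((-1::real) gchoose m) = (-1)^m"
    using gbinomial_minus[of "1::real" m] by (simp add: binomial_gbinomial[symmetric])
  finally have e: "(\<Sum>k = 0..m. ((-(1/2)::real) gchoose k) * ((-(1/2)) gchoose (m - k))) = (-1)^m" .
  have "((-(1/2)::real) gchoose k) * ((-(1/2)) gchoose (m - k)) = (-1)^m * (real ((2*k) choose k) * real ((2*(m-k)) choose (m-k)) / 4^m)"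
    if "k \<le> m" for k
  proof -
    have a: "(-1::real)^k * (-1)^(m-k) = (-1)^m" "(4::real)^k * 4^(m-k) = 4^m"
      using that by (simp_all add: power_add[symmetric])
    have "((-(1/2)::real) gchoose k) * ((-(1/2)) gchoose (m - k)) =
       ((-1::real)^k * (-1)^(m-k)) * (real ((2*k) choose k) * real ((2*(m-k)) choose (m-k))) / ((4::real)^k * 4^(m-k))"
      by (simp only: gchoose_half times_divide_times_eq mult_ac)
    then show ?thesis by (simp only: a times_divide_eq_right)
  qed
  then have "(\<Sum>k = 0..m. ((-(1/2)::real) gchoose k) * ((-(1/2)) gchoose (m - k))) =
     (\<Sum>k = 0..m. (-1)^m * (real ((2*k) choose k) * real ((2*(m-k)) choose (m-k)) / 4^m))"
    by (intro sum.cong) auto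
  also have "\<dots> = (-1)^m * (\<Sum>i\<le>m. real ((2*i) choose i) * real ((2*(m-i)) choose (m-i)) / 4^m)"
    by (simp only: sum_distrib_left atLeast0AtMost)
  finally have "(-1::real)^m * (\<Sum>i\<le>m. real ((2*i) choose i) * real ((2*(m-i)) choose (m-i)) / 4^m) = (-1)^m * 1"
    using e by simp
  then show ?thesis by (subst (asm) mult_left_cancel) simp_all
qed

lemma central_nat: "(\<Sum>i\<le>m. ((2*i) choose i) * ((2*(m-i)) choose (m-i))) = 4^m"
proof -
  have "real (\<Sum>i\<le>m. ((2*i) choose i) * ((2*(m-i)) choose (m-i))) = real ((4::nat)^m)"
  proof -
    have "(\<Sum>i\<le>m. real ((2*i) choose i) * real ((2*(m-i)) choose (m-i))) / 4^m = 1"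
      using central_real[of m] by (simp only: sum_divide_distrib[symmetric])
    then have "(\<Sum>i\<le>m. real ((2*i) choose i) * real ((2*(m-i)) choose (m-i))) = 4^m"
      by (simp add: divide_eq_1_iff)
    then show ?thesis by simp
  qed
  then show ?thesis by (simp only: of_nat_eq_iff)
qed


fun S :: "nat \<Rightarrow> nat \<Rightarrow> int" where
  "S 0 r = int ((2*r) choose r)"
| "S (Suc p) r = 4 * S p r - S p (Suc r)"

lemma S_aux:
  fixes a b P Q R X Y p r :: real
  assumes A: "a * (P * Q * R) = X * Y"
    and B: "b * (P * ((p+r+1) * Q) * ((r+1) * R)) = X * ((2*r+2)*(2*r+1)*Y)"
    and r: "r \<ge> 0"
  shows "(4*a - b) * (((p+1)*P) * ((p+r+1)*Q) * R) = ((2*p+2)*(2*p+1)*X) * Y"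
proof -
  have r1: "r + 1 \<noteq> 0" using r by linarith
  have "(r+1) * (b * P * (p+r+1) * Q * R) = (r+1) * (2*(2*r+1)*X*Y)"
    using B by (simp add: algebra_simps)
  then have B': "b * P * (p+r+1) * Q * R = 2*(2*r+1)*X*Y" using r1 by simp
  have "(4*a - b) * (((p+1)*P) * ((p+r+1)*Q) * R) = 4*(p+1)*(p+r+1)*(a*(P*Q*R)) - (p+1)*(b * P * (p+r+1) * Q * R)"
    by (simp add: algebra_simps)
  also have "\<dots> = 4*(p+1)*(p+r+1)*(X*Y) - (p+1)*(2*(2*r+1)*X*Y)" by (simp only: A B')
  also have "\<dots> = ((2*p+2)*(2*p+1)*X) * Y" by (simp add: algebra_simps)
  finally show ?thesis .
qed

lemma S_fact: "real_of_int (S p r) * (fact p * fact (p+r) * fact r) = fact (2*p) * fact (2*r)"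
proof (induction p arbitrary: r)
  case 0
  have n: "fact r * fact r * ((2*r) choose r) = (fact (2*r) :: nat)"
    using binomial_fact_lemma[of r "2*r"] by (simp add: mult_2)
  then have "(of_nat (fact r * fact r * ((2*r) choose r)) :: real) = of_nat (fact (2*r))" by (simp only:)
  then have "fact r * fact r * real ((2*r) choose r) = (fact (2*r) :: real)" by (simp only: of_nat_mult of_nat_fact)
  then show ?case by (simp add: algebra_simps)
next
  case (Suc p)
  have A: "real_of_int (S p r) * (fact p * fact (p+r) * fact r) = fact (2*p) * fact (2*r)" by (rule Suc.IH)
  have B: "real_of_int (S p (Suc r)) * (fact p * fact (p+Suc r) * fact (Suc r)) = fact (2*p) * fact (2*Suc r)"
    by (rule Suc.IH)
  have f1: "(fact (p + Suc r) :: real) = (real p + real r + 1) * fact (p+r)" by simp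
  have f2: "(fact (Suc r) :: real) = (real r + 1) * fact r" by simp
  have f3: "(fact (2 * Suc r) :: real) = (2*real r+2)*(2*real r+1)*fact(2*r)" by (simp add: algebra_simps)
  have f4: "(fact (2 * Suc p) :: real) = (2*real p+2)*(2*real p+1)*fact(2*p)" by (simp add: algebra_simps)
  have f5: "(fact (Suc p) :: real) = (real p + 1) * fact p" by simp
  have f6: "(fact (Suc p + r) :: real) = (real p + real r + 1) * fact (p+r)" by simp
  have "(4 * real_of_int (S p r) - real_of_int (S p (Suc r))) * (((real p+1)*fact p) * ((real p+real r+1)*fact (p+r)) * fact r)
      = ((2*real p+2)*(2*real p+1)*fact (2*p)) * fact (2*r)"
  proof (rule S_aux[OF A])
    show "real_of_int (S p (Suc r)) * (fact p * ((real p + real r + 1) * fact (p + r)) * ((real r + 1) * fact r)) =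
      fact (2 * p) * ((2 * real r + 2) * (2 * real r + 1) * fact (2 * r))"
      using B by (simp only: f1 f2 f3)
  qed simp
  then show ?case by (simp only: S.simps f4 f5 f6) simp
qed

lemma S_nat: "S p r \<ge> 0 \<and> nat (S p r) * (fact p * fact (p+r) * fact r) = (fact (2*p) * fact (2*r) :: nat)"
proof -
  have "real_of_int (S p r * int (fact p * fact (p+r) * fact r)) = real_of_int (int (fact (2*p) * fact (2*r)))"
    using S_fact[of p r] by simp
  then have e: "S p r * int (fact p * fact (p+r) * fact r) = int (fact (2*p) * fact (2*r))"
    by (simp only: of_int_eq_iff)
  have pos: "int (fact p * fact (p+r) * fact r) > 0" "int (fact (2*p) * fact (2*r)) > 0"
    by (simp_all add: fact_gt_zero)
  then have "S p r > 0" using e by (metis zero_less_mult_pos2)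
  then show ?thesis using e by (metis nat_int nat_mult_distrib of_nat_0_le_iff less_le)
qed

lemma superC_S: "superC p r = nat (S p r)"
proof -
  have "(fact p * fact (p+r) * fact r :: nat) > 0" by (simp add: fact_gt_zero)
  then show ?thesis unfolding superC_def using S_nat[of p r]
    by (metis nonzero_mult_div_cancel_right less_numeral_extra(3))
qed

lemma superC_0: "superC 0 r = (2*r) choose r" by (simp add: superC_S)

lemma superC_rec: "superC (Suc p) r + superC p (Suc r) = 4 * superC p r"
proof -
  have "S (Suc p) r \<ge> 0" "S p (Suc r) \<ge> 0" "S p r \<ge> 0" using S_nat by blast+
  then show ?thesis by (simp add: superC_S nat_add_distrib[symmetric] nat_mult_distrib)
qed


definition cc :: "nat \<Rightarrow> 'k::field" where
  "cc j = of_nat ((2*(j div 2)) choose (j div 2)) / 2^(2*(j div 2))"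

definition bb :: "nat \<Rightarrow> 'k::field" where
  "bb m = of_nat ((2*m) choose m) / 2^(2*m)"

lemma cc_even: "cc (2*k) = bb k" by (simp add: cc_def bb_def)
lemma cc_odd: "cc (2*k+1) = bb k" by (simp add: cc_def bb_def)
lemma cc_0: "cc 0 = 1" by (simp add: cc_def)

lemma bb_conv: assumes "(2::'k::field) \<noteq> 0" shows "(\<Sum>i\<le>m. bb i * bb (m-i)) = (1::'k)"
proof -
  have "(\<Sum>i\<le>m. bb i * bb (m-i)) = (\<Sum>i\<le>m. (of_nat (((2*i) choose i) * ((2*(m-i)) choose (m-i))) :: 'k) / 2^(2*m))"
  proof (rule sum.cong)
    fix i assume "i \<in> {..m}"
    then have "2*i + 2*(m-i) = 2*m" by simp
    then have "(2::'k)^(2*i) * 2^(2*(m-i)) = 2^(2*m)" by (simp only: power_add[symmetric])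
    then show "bb i * bb (m-i) = (of_nat (((2*i) choose i) * ((2*(m-i)) choose (m-i))) :: 'k) / 2^(2*m)"
      by (simp add: bb_def)
  qed simp
  also have "\<dots> = of_nat (\<Sum>i\<le>m. ((2*i) choose i) * ((2*(m-i)) choose (m-i))) / 2^(2*m)"
    by (simp add: sum_divide_distrib)
  also have "\<dots> = of_nat (4^m) / 2^(2*m)" by (simp only: central_nat)
  also have "(of_nat (4^m) :: 'k) = 2^(2*m)" by (simp add: power_mult)
  then have "(of_nat (4^m) :: 'k) / 2^(2*m) = 1" using assms by simp
  finally show ?thesis .
qed
lemma dummy_bb: "True"
  by simp

lemma sum_even_split: "(\<Sum>j\<le>2*(M::nat). f j) = (\<Sum>i\<le>M. f (2*i)) + (\<Sum>i<M. f (2*i+1))"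
  by (induction M) (simp_all add: algebra_simps)

lemma sum_odd_split: "(\<Sum>j\<le>2*(M::nat)+1. f j) = (\<Sum>i\<le>M. f (2*i)) + (\<Sum>i\<le>M. f (2*i+1))"
  by (induction M) (simp_all add: algebra_simps)

lemma cc_conv: assumes two: "(2::'k::field) \<noteq> 0" and J: "J \<ge> 1"
  shows "(\<Sum>j\<le>J. cc j * cc (J-j)) = (2::'k)"
proof (cases "even J")
  case True
  then obtain M where M: "J = 2*M" by blast
  with J have M1: "M \<ge> 1" by simp
  have "(\<Sum>j\<le>J. cc j * cc (J-j)) = (\<Sum>i\<le>M. cc (2*i) * cc (2*M - 2*i)) + (\<Sum>i<M. cc (2*i+1) * cc (2*M - (2*i+1)))"
    unfolding M by (rule sum_even_split)
  also have "(\<Sum>i\<le>M. cc (2*i) * cc (2*M - 2*i)) = (\<Sum>i\<le>M. bb i * (bb (M-i) :: 'k))"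
  proof (rule sum.cong)
    fix i have "2*M - 2*i = 2*(M-i)" by simp
    then show "cc (2*i) * cc (2*M - 2*i) = bb i * (bb (M-i) :: 'k)"
      by (simp only: cc_even)
  qed simp
  also have "(\<Sum>i<M. cc (2*i+1) * cc (2*M - (2*i+1))) = (\<Sum>i\<le>M-1. bb i * (bb (M-1-i) :: 'k))"
  proof -
    have "{..<M} = {..M-1}" using M1 by auto
    moreover have "cc (2*i+1) * cc (2*M - (2*i+1)) = bb i * (bb (M-1-i) :: 'k)" if "i < M" for i
    proof -
      have e: "2*M - (2*i+1) = 2*(M-1-i)+1" using that by simp
      show ?thesis by (simp only: e cc_odd)
    qed
    ultimately show ?thesis by (intro sum.cong) auto
  qed
  finally show ?thesis using bb_conv[OF two, of M] bb_conv[OF two, of "M-1"] by simp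
next
  case False
  then obtain M where M: "J = 2*M+1" by (metis oddE)
  have "(\<Sum>j\<le>J. cc j * cc (J-j)) = (\<Sum>i\<le>M. cc (2*i) * cc (2*M+1 - 2*i)) + (\<Sum>i\<le>M. cc (2*i+1) * cc (2*M+1 - (2*i+1)))"
    unfolding M by (rule sum_odd_split)
  also have "(\<Sum>i\<le>M. cc (2*i) * cc (2*M+1 - 2*i)) = (\<Sum>i\<le>M. bb i * (bb (M-i) :: 'k))"
  proof (rule sum.cong)
    fix i assume "i \<in> {..M}"
    then have e: "2*M+1 - 2*i = 2*(M-i)+1" by simp
    show "cc (2*i) * cc (2*M+1 - 2*i) = bb i * (bb (M-i) :: 'k)" by (simp only: e cc_even cc_odd)
  qed simp
  also have "(\<Sum>i\<le>M. cc (2*i+1) * cc (2*M+1 - (2*i+1))) = (\<Sum>i\<le>M. bb i * (bb (M-i) :: 'k))"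
  proof (rule sum.cong)
    fix i assume "i \<in> {..M}"
    then have e: "2*M+1 - (2*i+1) = 2*(M-i)" by simp
    show "cc (2*i+1) * cc (2*M+1 - (2*i+1)) = bb i * (bb (M-i) :: 'k)" by (simp only: e cc_even cc_odd)
  qed simp
  finally show ?thesis using bb_conv[OF two] by simp
qed

definition Ecnt :: "nat list \<Rightarrow> nat" where "Ecnt \<beta> = length (filter even \<beta>)"
definition Jcnt :: "nat list \<Rightarrow> nat" where "Jcnt \<beta> = length (filter odd \<beta>)"

lemma Ecnt_simps[simp]: "Ecnt [] = 0" "Ecnt (a#xs) = (if even a then 1 else 0) + Ecnt xs"
  by (simp_all add: Ecnt_def)
lemma Jcnt_simps[simp]: "Jcnt [] = 0" "Jcnt (a#xs) = (if odd a then 1 else 0) + Jcnt xs"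
  by (simp_all add: Jcnt_def)
lemma Ecnt_take_drop: "Ecnt (take i xs) + Ecnt (drop i xs) = Ecnt xs"
  unfolding Ecnt_def by (metis append_take_drop_id filter_append length_append)
lemma Jcnt_take_drop: "Jcnt (take i xs) + Jcnt (drop i xs) = Jcnt xs"
  unfolding Jcnt_def by (metis append_take_drop_id filter_append length_append)

lemma h_lemma: "(\<Sum>i\<le>length \<beta>. (if i = 0 \<or> odd (\<beta>!(i-1)) then h (Jcnt (take i \<beta>)) (Jcnt (drop i \<beta>)) else 0))
   = (\<Sum>j\<le>Jcnt \<beta>. h j (Jcnt \<beta> - j))"
proof (induction \<beta> arbitrary: h)
  case Nil then show ?case by simp
next
  case (Cons a \<gamma>)
  have L: "(\<Sum>i\<le>length (a#\<gamma>). (if i = 0 \<or> odd ((a#\<gamma>)!(i-1)) then h (Jcnt (take i (a#\<gamma>))) (Jcnt (drop i (a#\<gamma>))) else 0))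
     = h 0 (Jcnt (a#\<gamma>)) + (\<Sum>i\<le>length \<gamma>. (if odd ((a#\<gamma>)!i) then h (Jcnt (a # take i \<gamma>)) (Jcnt (drop i \<gamma>)) else 0))"
    by (simp add: sum.atMost_Suc_shift del: sum.atMost_Suc cong: if_cong)
  show ?case
  proof (cases "odd a")
    case True
    have "(\<Sum>i\<le>length \<gamma>. (if odd ((a#\<gamma>)!i) then h (Jcnt (a # take i \<gamma>)) (Jcnt (drop i \<gamma>)) else 0))
      = (\<Sum>i\<le>length \<gamma>. (if i = 0 \<or> odd (\<gamma>!(i-1)) then (\<lambda>x y. h (Suc x) y) (Jcnt (take i \<gamma>)) (Jcnt (drop i \<gamma>)) else 0))"
      by (rule sum.cong) (use True in \<open>auto split: nat.split simp: nth_Cons'\<close>)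
    also have "\<dots> = (\<Sum>j\<le>Jcnt \<gamma>. h (Suc j) (Jcnt \<gamma> - j))" by (rule Cons.IH)
    finally show ?thesis using True L by (simp add: sum.atMost_Suc_shift del: sum.atMost_Suc)
  next
    case False
    have "(\<Sum>i\<le>length \<gamma>. (if i = 0 \<or> odd (\<gamma>!(i-1)) then h (Jcnt (take i \<gamma>)) (Jcnt (drop i \<gamma>)) else 0))
       = h 0 (Jcnt \<gamma>) + (\<Sum>i\<le>length \<gamma>. (if odd ((a#\<gamma>)!i) then h (Jcnt (a # take i \<gamma>)) (Jcnt (drop i \<gamma>)) else 0))"
    proof (cases \<gamma>)
      case Nil then show ?thesis using False by simp
    next
      case (Cons b \<delta>)
      show ?thesis unfolding Cons
        by (simp add: sum.atMost_Suc_shift False del: sum.atMost_Suc cong: if_cong)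
    qed
    then show ?thesis using False L Cons.IH[of h] by simp
  qed
qed


definition mM :: "nat list \<Rightarrow> 'k::field" where
  "mM \<beta> = (if is_comp \<beta> \<and> (\<beta> = [] \<or> odd (last \<beta>)) then (-1)^Ecnt \<beta> * cc (Jcnt \<beta>) else 0)"

definition chiM :: "nat list \<Rightarrow> 'k::field" where
  "chiM \<beta> = (if is_comp \<beta> then (if \<beta> = [] then 1 else if odd (last \<beta>) then 2 * (-1)^Ecnt \<beta> else 0) else 0)"

lemma Zb_Cons: "Zb (a#u) = (if 0 < a then (-1)^a else 0) * counit u"
  by (cases u) (simp_all add: Zb_def bar_def zeta_def)

lemma conv_Zb_Cons: "conv Zb f (a#xs) = f (a#xs) + (if 0 < a then (-1)^a else 0) * f xs"
proof -
  have "(\<lambda>u. Zb (a#u)) = (\<lambda>u. (if 0 < a then (-1)^a else 0) * counit u)"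
    by (rule ext) (rule Zb_Cons)
  have "conv Zb f (a#xs) = Zb [] * f (a#xs) + conv (\<lambda>u. Zb (a#u)) f xs" by (rule conv_Cons)
  also have "\<dots> = f (a#xs) + (if 0 < a then (-1)^a else 0) * f xs"
    by (simp only: Zb_Nil \<open>(\<lambda>u. Zb (a#u)) = _\<close> conv_scal_counit mult_1)
  finally show ?thesis .
qed

lemma conv_Zb_chiM: "conv Zb chiM xs = (zeta xs :: 'k::field)"
proof (cases xs)
  case Nil then show ?thesis by (simp add: Zb_Nil chiM_def zeta_def)
next
  case (Cons a ys)
  show ?thesis
  proof (cases "0 < a \<and> is_comp ys")
    case False
    then show ?thesis unfolding Cons conv_Zb_Cons by (auto simp: chiM_def zeta_def)
  next
    case True
    show ?thesis
    proof (cases "ys = []")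
      case True
      then show ?thesis unfolding Cons conv_Zb_Cons using \<open>0 < a \<and> is_comp ys\<close>
        by (simp add: chiM_def zeta_def minus_one_power_iff)
    next
      case False
      then have l: "last (a#ys) = last ys" by simp
      have z: "zeta (a#ys) = (0::'k)" using False by (cases ys) (simp_all add: zeta_def)
      show ?thesis unfolding Cons conv_Zb_Cons z using \<open>0 < a \<and> is_comp ys\<close> False
        by (simp add: chiM_def l minus_one_power_iff power_add)
    qed
  qed
qed

lemma chi_eq: "chi = (chiM :: nat list \<Rightarrow> 'k::field)"
proof -
  have z: "conv Zb chiM = (zeta :: nat list \<Rightarrow> 'k)" by (rule ext) (rule conv_Zb_chiM)
  have "(chi :: nat list \<Rightarrow> 'k) = conv Zbi (conv Zb chiM)" by (simp only: chi_def z)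
  also have "\<dots> = chiM" by (simp only: conv_assoc'[symmetric] Zbi_l conv_counit_left')
  finally show ?thesis .
qed

lemma last_drop': "i < length xs \<Longrightarrow> last (drop i xs) = last xs"
  by (metis append_take_drop_id drop_eq_Nil2 last_appendR not_le)

lemma last_take': assumes "0 < i" "i \<le> length xs" shows "last (take i xs) = xs ! (i - 1)"
proof -
  obtain j where j: "i = Suc j" using \<open>0 < i\<close> by (cases i) auto
  then have "j < length xs" using \<open>i \<le> length xs\<close> by simp
  then show ?thesis unfolding j by (simp add: take_Suc_conv_app_nth)
qed

lemma functional_mM: "is_functional mM" by (simp add: is_functional_def mM_def)

lemma mM_sq: assumes two: "(2::'k::field) \<noteq> 0" shows "conv mM mM xs = (chiM xs :: 'k)"
proof (cases "is_comp xs")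
  case False
  have "is_functional (conv (mM :: nat list \<Rightarrow> 'k) mM)" by (rule functional_conv[OF functional_mM functional_mM])
  then show ?thesis using False by (simp add: is_functional_def chiM_def)
next
  case comp: True
  show ?thesis
  proof (cases "xs = []")
    case True then show ?thesis by (simp add: mM_def chiM_def cc_0)
  next
    case ne: False
    show ?thesis
    proof (cases "odd (last xs)")
      case False
      have "mM (drop i xs) = (0::'k)" if "i < length xs" for i
        using False last_drop'[OF that] that by (simp add: mM_def)
      then have "conv mM mM xs = (0::'k)"
        using conv_split_last[OF ne, of mM mM] False ne by (simp add: mM_def)
      then show ?thesis using False ne comp by (simp add: chiM_def)
    next
      case True
      have J1: "Jcnt xs \<ge> 1"
      proof -
        have "last xs \<in> set (filter odd xs)" using True ne by simp
        then show ?thesis unfolding Jcnt_def by (cases "filter odd xs") auto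
      qed
      have trm: "mM (take i xs) * mM (drop i xs) = (-1)^Ecnt xs *
          (if i = 0 \<or> odd (xs!(i-1)) then cc (Jcnt (take i xs)) * cc (Jcnt (drop i xs)) else (0::'k))"
        if "i \<in> {..length xs}" for i
      proof -
        have ct: "is_comp (take i xs)" "is_comp (drop i xs)" using comp by (simp_all add: is_comp_take is_comp_drop)
        have md: "mM (drop i xs) = (-1)^Ecnt (drop i xs) * (cc (Jcnt (drop i xs)) :: 'k)"
        proof (cases "i < length xs")
          case True then show ?thesis using ct last_drop'[OF True] \<open>odd (last xs)\<close> by (simp add: mM_def)
        next
          case False then show ?thesis using ct by (simp add: mM_def)
        qed
        have tk: "(take i xs = [] \<or> odd (last (take i xs))) \<longleftrightarrow> (i = 0 \<or> odd (xs!(i-1)))"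
          using that ne last_take'[of i xs] by auto
        have mt: "mM (take i xs) = (if i = 0 \<or> odd (xs!(i-1)) then (-1)^Ecnt (take i xs) * (cc (Jcnt (take i xs)) :: 'k) else 0)"
          using ct tk by (simp add: mM_def)
        have "(-1::'k)^Ecnt (take i xs) * (-1)^Ecnt (drop i xs) = (-1)^Ecnt xs"
          by (simp add: power_add[symmetric] Ecnt_take_drop)
        then show ?thesis using md mt by (simp add: algebra_simps)
      qed
      have "conv mM mM xs = (\<Sum>i\<le>length xs. (-1)^Ecnt xs *
          (if i = 0 \<or> odd (xs!(i-1)) then cc (Jcnt (take i xs)) * cc (Jcnt (drop i xs)) else (0::'k)))"
        unfolding conv_def by (rule sum.cong) (simp_all only: trm)
      also have "\<dots> = (-1)^Ecnt xs * (\<Sum>i\<le>length xs.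
          (if i = 0 \<or> odd (xs!(i-1)) then cc (Jcnt (take i xs)) * cc (Jcnt (drop i xs)) else (0::'k)))"
        by (simp only: sum_distrib_left)
      also have "(\<Sum>i\<le>length xs.
          (if i = 0 \<or> odd (xs!(i-1)) then cc (Jcnt (take i xs)) * cc (Jcnt (drop i xs)) else (0::'k)))
          = (\<Sum>j\<le>Jcnt xs. cc j * cc (Jcnt xs - j))"
        by (rule h_lemma)
      also have "\<dots> = 2" by (rule cc_conv[OF two J1])
      finally show ?thesis using True ne comp by (simp add: chiM_def)
    qed
  qed
qed

lemma m0_eq: assumes two: "(2::'k::field) \<noteq> 0" shows "m0 = (mM :: nat list \<Rightarrow> 'k)"
proof (rule ext, rule sqr_uniq[OF _ _ two])
  show "m0 [] = (1::'k)" by (rule m0_Nil)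
  show "mM [] = (1::'k)" by (simp add: mM_def cc_0)
  fix xs show "conv (m0 :: nat list \<Rightarrow> 'k) m0 xs = conv mM mM xs"
    by (simp add: m0m0[OF two] chi_eq mM_sq[OF two])
qed

lemma p0_Cons: assumes two: "(2::'k::field) \<noteq> 0"
  shows "(p0 :: nat list \<Rightarrow> 'k) (a#xs) = mM (a#xs) + (if 0 < a then (-1)^a else 0) * mM xs"
  by (simp add: p0_def m0_eq[OF two] conv_Zb_Cons)

lemma p0_Nil: "(p0 :: nat list \<Rightarrow> 'k::field) [] = 1"
  by (simp add: p0_def Zb_Nil m0_Nil)


definition Lf :: "'k::field poly \<Rightarrow> 'k" where
  "Lf P = (\<Sum>i\<le>degree P. coeff P i * cc i)"

lemma Lf_ext: assumes "degree P \<le> N" shows "Lf P = (\<Sum>i\<le>N. coeff P i * cc i)"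
proof -
  have "(\<Sum>i\<le>N. coeff P i * cc i) = (\<Sum>i\<le>degree P. coeff P i * cc i)"
  proof (rule sum.mono_neutral_right)
    show "\<forall>i\<in>{..N} - {..degree P}. coeff P i * cc i = 0"
      by (auto simp: coeff_eq_0)
  qed (use assms in auto)
  then show ?thesis by (simp add: Lf_def)
qed

lemma Lf_add: "Lf (P + Q) = Lf P + Lf Q"
proof -
  let ?N = "max (degree P) (degree Q)"
  have "degree (P + Q) \<le> ?N" by (rule degree_add_le) auto
  then show ?thesis
    by (simp add: Lf_ext[of "P+Q" ?N] Lf_ext[of P ?N] Lf_ext[of Q ?N] algebra_simps sum.distrib)
qed

lemma Lf_smult: "Lf (smult c P) = c * Lf P"
proof -
  have "degree (smult c P) \<le> degree P" by (rule degree_smult_le)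
  then show ?thesis by (simp add: Lf_ext[of "smult c P" "degree P"] Lf_def sum_distrib_left mult.assoc)
qed

lemma Lf_0[simp]: "Lf 0 = 0" by (simp add: Lf_def)

lemma Lf_uminus: "Lf (- P) = - Lf P"
  using Lf_smult[of "-1" P] by simp

lemma Lf_diff: "Lf (P - Q) = Lf P - Lf Q"
  using Lf_add[of P "-Q"] Lf_uminus[of Q] by simp

lemma Lf_sum: "Lf (\<Sum>x\<in>A. f x) = (\<Sum>x\<in>A. Lf (f x))"
  by (induction A rule: infinite_finite_induct) (simp_all add: Lf_add)

lemma Lf_monom: "Lf (monom c j) = c * cc j"
proof -
  have "Lf (monom c j) = (\<Sum>i\<le>j. coeff (monom c j) i * cc i)" by (rule Lf_ext[OF degree_monom_le])
  also have "\<dots> = (\<Sum>i\<le>j. if i = j then c * cc i else 0)" by (rule sum.cong) auto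
  also have "\<dots> = c * cc j" by simp
  finally show ?thesis .
qed

definition W :: "nat list \<Rightarrow> 'k::field poly" where
  "W \<beta> = smult ((-1)^Ecnt \<beta>) (monom 1 (Jcnt \<beta>))"

lemma Lf_W: "Lf (W \<beta>) = (-1)^Ecnt \<beta> * cc (Jcnt \<beta>)"
  by (simp add: W_def Lf_smult Lf_monom)

lemma W_Nil[simp]: "W [] = 1" by (simp add: W_def monom_0 one_pCons)

lemma W_append: "W (xs @ ys) = W xs * W ys"
  by (simp add: W_def Ecnt_def Jcnt_def mult_monom power_add mult_ac)

lemma W_single: "W [c] = (if odd c then monom 1 1 else -1)"
  by (cases "odd c") (simp_all add: W_def monom_0 one_pCons smult_minus_left)

lemma W_Cons: "W (c # ys) = (if odd c then monom 1 1 else -1) * W ys"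
  using W_append[of "[c]" ys] by (simp add: W_single)

lemma W_rev: "W (rev xs) = W xs"
  by (simp add: W_def Ecnt_def Jcnt_def rev_filter[symmetric])

lemma mM_L: "mM \<beta> = (if is_comp \<beta> \<and> (\<beta> = [] \<or> odd (last \<beta>)) then Lf (W \<beta>) else 0)"
  by (auto simp: mM_def Lf_W)

definition compset :: "nat \<Rightarrow> nat list set" where
  "compset a = {\<gamma>. is_comp_of \<gamma> a}"

lemma compset_finite: "finite (compset a)"
proof -
  have "compset a \<subseteq> {xs. set xs \<subseteq> {..a} \<and> length xs \<le> a}"
  proof
    fix \<gamma> assume "\<gamma> \<in> compset a"
    then have c: "is_comp \<gamma>" "sum_list \<gamma> = a" by (auto simp: compset_def is_comp_of_def)
    have "x \<le> a" if "x \<in> set \<gamma>" for x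
      using member_le_sum_list[OF that] c by simp
    moreover have "length \<gamma> \<le> a"
    proof -
      have "length \<gamma> \<le> sum_list \<gamma>" using c(1)
        by (induction \<gamma>) (auto simp: is_comp_def)
      then show ?thesis using c by simp
    qed
    ultimately show "\<gamma> \<in> {xs. set xs \<subseteq> {..a} \<and> length xs \<le> a}" by auto
  qed
  moreover have "finite {xs. set xs \<subseteq> {..a} \<and> length xs \<le> a}"
    by (rule finite_lists_length_le) simp
  ultimately show ?thesis by (rule finite_subset)
qed

lemma compset_0: "compset 0 = {[]}"
proof -
  have "\<gamma> = []" if "\<gamma> \<in> compset 0" for \<gamma>
    using that by (cases \<gamma>) (auto simp: compset_def is_comp_of_def)
  then show ?thesis by (auto simp: compset_def is_comp_of_def)
qed

lemma compset_nonempty: "\<gamma> \<in> compset a \<Longrightarrow> 0 < a \<Longrightarrow> \<gamma> \<noteq> []"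
  by (auto simp: compset_def is_comp_of_def)

lemma compset_1: "compset 1 = {[1]}"
proof -
  have "\<gamma> = [1]" if "\<gamma> \<in> compset 1" for \<gamma>
  proof (cases \<gamma>)
    case Nil then show ?thesis using that by (simp add: compset_def is_comp_of_def)
  next
    case (Cons c r)
    then show ?thesis using that by (cases r) (auto simp: compset_def is_comp_of_def is_comp_def)
  qed
  then show ?thesis by (auto simp: compset_def is_comp_of_def is_comp_def)
qed

fun inc :: "nat list \<Rightarrow> nat list" where
  "inc [] = []" | "inc (c # r) = Suc c # r"

lemma compset_Suc: assumes "0 < a"
  shows "compset (Suc a) = (Cons 1) ` compset a \<union> inc ` compset a"
proof
  show "compset (Suc a) \<subseteq> (Cons 1) ` compset a \<union> inc ` compset a"
  proof
    fix \<gamma> assume g: "\<gamma> \<in> compset (Suc a)"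
    then obtain c r where \<gamma>: "\<gamma> = c # r" by (cases \<gamma>) (auto simp: compset_def is_comp_of_def)
    show "\<gamma> \<in> (Cons 1) ` compset a \<union> inc ` compset a"
    proof (cases "c = 1")
      case True
      then have "r \<in> compset a" using g \<gamma> by (simp add: compset_def is_comp_of_def)
      then show ?thesis using True \<gamma> by auto
    next
      case False
      then have "c \<ge> 2" using g \<gamma> by (simp add: compset_def is_comp_of_def)
      then have "(c - 1) # r \<in> compset a" "\<gamma> = inc ((c-1) # r)"
        using g \<gamma> by (auto simp: compset_def is_comp_of_def)
      then show ?thesis by blast
    qed
  qed
next
  show "(Cons 1) ` compset a \<union> inc ` compset a \<subseteq> compset (Suc a)"
  proof
    fix \<gamma> assume "\<gamma> \<in> (Cons 1) ` compset a \<union> inc ` compset a"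
    then show "\<gamma> \<in> compset (Suc a)"
    proof
      assume "\<gamma> \<in> (Cons 1) ` compset a" then show ?thesis by (auto simp: compset_def is_comp_of_def)
    next
      assume "\<gamma> \<in> inc ` compset a"
      then obtain \<delta> where d: "\<delta> \<in> compset a" "\<gamma> = inc \<delta>" by auto
      then obtain c r where "\<delta> = c # r" using assms by (cases \<delta>) (auto simp: compset_def is_comp_of_def)
      then show ?thesis using d by (auto simp: compset_def is_comp_of_def)
    qed
  qed
qed

lemma sum_compset_Suc: assumes "0 < a"
  shows "(\<Sum>\<gamma>\<in>compset (Suc a). f \<gamma>) = (\<Sum>\<gamma>\<in>compset a. f (1 # \<gamma>)) + (\<Sum>\<gamma>\<in>compset a. f (inc \<gamma>))"
proof -
  have inj1: "inj_on (Cons 1) (compset a)" by (auto simp: inj_on_def)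
  have inj2: "inj_on inc (compset a)"
  proof (rule inj_onI)
    fix x y assume "x \<in> compset a" "y \<in> compset a" "inc x = inc y"
    then show "x = y" using compset_nonempty[OF _ assms] by (cases x; cases y) auto
  qed
  have disj: "(Cons 1) ` compset a \<inter> inc ` compset a = {}"
  proof -
    have h: "hd (inc \<delta>) \<ge> 2" if "\<delta> \<in> compset a" for \<delta>
      using that compset_nonempty[OF that assms] by (cases \<delta>) (auto simp: compset_def is_comp_of_def)
    have "x \<notin> inc ` compset a" if "x \<in> (Cons 1) ` compset a" for x
    proof
      assume "x \<in> inc ` compset a"
      then obtain \<delta> where d: "\<delta> \<in> compset a" "x = inc \<delta>" by auto
      have "hd x = 1" using that by auto
      then show False using h[OF d(1)] d(2) by simp
    qed
    then show ?thesis by blast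
  qed
  have "sum f ((Cons 1) ` compset a \<union> inc ` compset a) = sum f ((Cons 1) ` compset a) + sum f (inc ` compset a)"
    by (intro sum.union_disjoint finite_imageI compset_finite disj)
  also have "sum f ((Cons 1) ` compset a) = (\<Sum>\<gamma>\<in>compset a. f (1 # \<gamma>))"
    by (simp only: sum.reindex[OF inj1] comp_def)
  also have "sum f (inc ` compset a) = (\<Sum>\<gamma>\<in>compset a. f (inc \<gamma>))"
    by (simp only: sum.reindex[OF inj2] comp_def)
  finally show ?thesis unfolding compset_Suc[OF assms] .
qed


abbreviation xP :: "'k::field poly" where "xP \<equiv> monom 1 1"

definition Asum :: "nat \<Rightarrow> 'k::field poly" where
  "Asum a = (\<Sum>\<gamma>\<in>compset a. if odd (hd \<gamma>) then W (tl \<gamma>) else 0)"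
definition Bsum :: "nat \<Rightarrow> 'k::field poly" where
  "Bsum a = (\<Sum>\<gamma>\<in>compset a. if even (hd \<gamma>) then W (tl \<gamma>) else 0)"
definition Psum :: "nat \<Rightarrow> 'k::field poly" where
  "Psum a = (\<Sum>\<gamma>\<in>compset a. W \<gamma>)"

lemma W_hd_tl: "\<gamma> \<noteq> [] \<Longrightarrow> W \<gamma> = (if odd (hd \<gamma>) then xP * W (tl \<gamma>) else 0) - (if even (hd \<gamma>) then W (tl \<gamma>) else 0)"
  by (cases \<gamma>) (simp_all add: W_Cons)

lemma compset_Suc0: "compset (Suc 0) = {[Suc 0]}" using compset_1 by simp

lemma Psum_AB: assumes "0 < a" shows "Psum a = (xP :: 'k::field poly) * Asum a - Bsum a"
proof -
  have "Psum a = (\<Sum>\<gamma>\<in>compset a. (if odd (hd \<gamma>) then (xP::'k poly) * W (tl \<gamma>) else 0) - (if even (hd \<gamma>) then W (tl \<gamma>) else 0))"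
    unfolding Psum_def
  proof (rule sum.cong)
    fix \<gamma> assume "\<gamma> \<in> compset a"
    then have "\<gamma> \<noteq> []" using compset_nonempty assms by blast
    then show "W \<gamma> = (if odd (hd \<gamma>) then (xP::'k poly) * W (tl \<gamma>) else 0) - (if even (hd \<gamma>) then W (tl \<gamma>) else 0)"
      by (rule W_hd_tl)
  qed simp
  also have "\<dots> = (\<Sum>\<gamma>\<in>compset a. if odd (hd \<gamma>) then (xP::'k poly) * W (tl \<gamma>) else 0) - (\<Sum>\<gamma>\<in>compset a. if even (hd \<gamma>) then W (tl \<gamma>) else 0)"
    by (rule sum_subtractf)
  also have "(\<Sum>\<gamma>\<in>compset a. if odd (hd \<gamma>) then (xP::'k poly) * W (tl \<gamma>) else 0) = xP * Asum a"
    unfolding Asum_def sum_distrib_left by (rule sum.cong) simp_all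
  finally show ?thesis by (simp only: Bsum_def)
qed

lemma inc_hd_tl: "\<gamma> \<noteq> [] \<Longrightarrow> hd (inc \<gamma>) = Suc (hd \<gamma>) \<and> tl (inc \<gamma>) = tl \<gamma>"
  by (cases \<gamma>) auto

lemma Asum_Suc: assumes "0 < a" shows "Asum (Suc a) = Psum a + (Bsum a :: 'k::field poly)"
proof -
  have "Asum (Suc a) = (\<Sum>\<gamma>\<in>compset a. W \<gamma>) + (\<Sum>\<gamma>\<in>compset a. if odd (hd (inc \<gamma>)) then (W (tl (inc \<gamma>)) :: 'k poly) else 0)"
    unfolding Asum_def sum_compset_Suc[OF assms] by simp
  also have "(\<Sum>\<gamma>\<in>compset a. if odd (hd (inc \<gamma>)) then (W (tl (inc \<gamma>)) :: 'k poly) else 0) = Bsum a"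
    unfolding Bsum_def by (rule sum.cong) (use inc_hd_tl compset_nonempty[OF _ assms] in auto)
  finally show ?thesis by (simp add: Psum_def)
qed

lemma Bsum_Suc: assumes "0 < a" shows "Bsum (Suc a) = (Asum a :: 'k::field poly)"
proof -
  have "Bsum (Suc a) = (\<Sum>\<gamma>\<in>compset a. if even (hd (inc \<gamma>)) then (W (tl (inc \<gamma>)) :: 'k poly) else 0)"
    unfolding Bsum_def sum_compset_Suc[OF assms] by simp
  also have "\<dots> = Asum a"
    unfolding Asum_def by (rule sum.cong) (use inc_hd_tl compset_nonempty[OF _ assms] in auto)
  finally show ?thesis .
qed

lemma AB_closed: "Asum (Suc n) = (xP :: 'k::field poly)^n \<and> Bsum (Suc n) = (if n = 0 then 0 else (xP :: 'k poly)^(n-1))"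
proof (induction n)
  case 0
  show ?case by (simp add: Asum_def Bsum_def compset_Suc0)
next
  case (Suc n)
  have "Asum (Suc (Suc n)) = Psum (Suc n) + (Bsum (Suc n) :: 'k poly)" by (rule Asum_Suc) simp
  also have "\<dots> = xP * Asum (Suc n)" by (simp add: Psum_AB)
  finally have A: "Asum (Suc (Suc n)) = (xP :: 'k poly)^Suc n" using Suc by simp
  have "Bsum (Suc (Suc n)) = (Asum (Suc n) :: 'k poly)" by (rule Bsum_Suc) simp
  then show ?case using A Suc by simp
qed

lemma Asum_closed: "0 < a \<Longrightarrow> Asum a = (xP :: 'k::field poly)^(a-1)"
  using AB_closed[of "a-1", where 'k='k] by simp

lemma Bsum_closed: "0 < a \<Longrightarrow> Bsum a = (if a = 1 then 0 else (xP :: 'k::field poly)^(a-2))"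
  using AB_closed[of "a-1", where 'k='k] by (cases a) auto

lemma Psum_closed: "0 < a \<Longrightarrow> Psum a = (xP :: 'k::field poly)^a - (if a = 1 then 0 else xP^(a-2))"
  by (simp add: Psum_AB Asum_closed Bsum_closed power_Suc[symmetric])

lemma sum_compset_rev: "(\<Sum>\<gamma>\<in>compset a. f \<gamma>) = (\<Sum>\<gamma>\<in>compset a. f (rev \<gamma>))"
  by (rule sum.reindex_bij_witness[where i=rev and j=rev]) (auto simp: compset_def is_comp_of_def is_comp_def)

lemma Qsum_closed: assumes "0 < a"
  shows "(\<Sum>\<gamma>\<in>compset a. if \<gamma> \<noteq> [] \<and> odd (last \<gamma>) then W \<gamma> else 0) = (xP :: 'k::field poly)^a"
proof -
  have "(\<Sum>\<gamma>\<in>compset a. if \<gamma> \<noteq> [] \<and> odd (last \<gamma>) then (W \<gamma> :: 'k poly) else 0)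
     = (\<Sum>\<gamma>\<in>compset a. if rev \<gamma> \<noteq> [] \<and> odd (last (rev \<gamma>)) then W (rev \<gamma>) else 0)"
    by (rule sum_compset_rev)
  also have "\<dots> = (\<Sum>\<gamma>\<in>compset a. xP * (if odd (hd \<gamma>) then W (tl \<gamma>) else 0))"
  proof (rule sum.cong)
    fix \<gamma> assume "\<gamma> \<in> compset a"
    then have "\<gamma> \<noteq> []" using compset_nonempty assms by blast
    then show "(if rev \<gamma> \<noteq> [] \<and> odd (last (rev \<gamma>)) then W (rev \<gamma>) else 0) = (xP :: 'k poly) * (if odd (hd \<gamma>) then W (tl \<gamma>) else 0)"
      by (cases \<gamma>) (simp_all add: W_rev last_rev W_Cons W_append W_single mult.commute)
  qed simp
  also have "\<dots> = xP * Asum a" by (simp add: Asum_def sum_distrib_left)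
  finally show ?thesis using assms by (simp add: Asum_closed power_Suc[symmetric])
qed

lemma W2sum_closed: assumes "0 < a"
  shows "(\<Sum>\<gamma>\<in>compset a. W \<gamma> + (if odd (hd \<gamma>) then - W (tl \<gamma>) else W (tl \<gamma>))) = ((xP :: 'k::field poly) - 1) * xP^(a-1)"
proof -
  have "(\<Sum>\<gamma>\<in>compset a. W \<gamma> + (if odd (hd \<gamma>) then - W (tl \<gamma>) else (W (tl \<gamma>) :: 'k poly)))
     = Psum a - Asum a + Bsum a"
  proof -
    have "(\<Sum>\<gamma>\<in>compset a. W \<gamma> + (if odd (hd \<gamma>) then - W (tl \<gamma>) else (W (tl \<gamma>) :: 'k poly)))
      = (\<Sum>\<gamma>\<in>compset a. W \<gamma> - (if odd (hd \<gamma>) then W (tl \<gamma>) else 0) + (if even (hd \<gamma>) then W (tl \<gamma>) else 0))"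
      by (rule sum.cong) auto
    then show ?thesis by (simp only: Psum_def Asum_def Bsum_def sum.distrib sum_subtractf)
  qed
  also have "\<dots> = (xP - 1) * xP^(a-1)" using assms by (simp add: Psum_AB Asum_closed algebra_simps)
  finally show ?thesis .
qed


definition Dk :: "nat \<Rightarrow> nat \<Rightarrow> 'k::field" where
  "Dk p r = (-1)^p * of_nat (superC p r) / 2^(2*(p+r))"

lemma Dk_rec: assumes two: "(2::'k::field) \<noteq> 0"
  shows "Dk p (Suc r) - Dk p r = (Dk (Suc p) r :: 'k)"
proof -
  have "of_nat (superC (Suc p) r) + of_nat (superC p (Suc r)) = (4::'k) * of_nat (superC p r)"
    using arg_cong[OF superC_rec[of p r], of "of_nat :: nat \<Rightarrow> 'k"] by simp
  then have e: "(of_nat (superC (Suc p) r) :: 'k) = 4 * of_nat (superC p r) - of_nat (superC p (Suc r))"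
    by (simp add: algebra_simps)
  have nz: "(2::'k)^(2*(p+r)) \<noteq> 0" using two by simp
  have four: "(4::'k) \<noteq> 0" using two by (metis mult_2 mult_eq_0_iff one_add_one numeral_Bit0 numeral_One)
  have p1: "(2::'k)^(2*(p + Suc r)) = 4 * 2^(2*(p+r))" "(2::'k)^(2*(Suc p + r)) = 4 * 2^(2*(p+r))"
    by (simp_all add: power_add power_mult)
  show ?thesis unfolding Dk_def p1 e using nz four two
    by (simp add: field_simps)
qed

lemma Lf_shift: assumes two: "(2::'k::field) \<noteq> 0"
  shows "Lf (monom (1::'k) N * (monom 1 2 - 1)^p) = Dk p (N div 2)"
proof (induction p arbitrary: N)
  case 0
  show ?case by (simp add: Lf_monom cc_def Dk_def superC_0)
next
  case (Suc p)
  have "monom (1::'k) N * (monom 1 2 - 1)^(Suc p) = monom 1 (N+2) * (monom 1 2 - 1)^p - monom 1 N * (monom 1 2 - 1)^p"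
    by (simp add: algebra_simps mult_monom)
  then have "Lf (monom (1::'k) N * (monom 1 2 - 1)^(Suc p)) = Dk p ((N+2) div 2) - Dk p (N div 2)"
    by (simp add: Lf_diff Suc.IH)
  also have "(N+2) div 2 = Suc (N div 2)" by simp
  finally show ?case by (simp add: Dk_rec[OF two])
qed

definition R :: "nat list \<Rightarrow> nat list list set" where
  "R \<alpha> = {\<beta>s. length \<beta>s = length \<alpha> \<and> (\<forall>i<length \<alpha>. is_comp_of (\<beta>s!i) (\<alpha>!i))}"

lemma R_Nil: "R [] = {[]}" by (auto simp: R_def)

lemma R_Cons: "R (a#\<alpha>) = (\<lambda>(\<gamma>,\<beta>s). \<gamma>#\<beta>s) ` (compset a \<times> R \<alpha>)"
proof
  show "R (a#\<alpha>) \<subseteq> (\<lambda>(\<gamma>,\<beta>s). \<gamma>#\<beta>s) ` (compset a \<times> R \<alpha>)"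
  proof
    fix \<beta>s assume b: "\<beta>s \<in> R (a#\<alpha>)"
    then obtain \<gamma> r where \<beta>s: "\<beta>s = \<gamma> # r" by (cases \<beta>s) (auto simp: R_def)
    have "\<gamma> \<in> compset a" using b \<beta>s by (force simp: R_def compset_def)
    moreover have "r \<in> R \<alpha>" using b \<beta>s by (auto simp: R_def)
    ultimately show "\<beta>s \<in> (\<lambda>(\<gamma>,\<beta>s). \<gamma>#\<beta>s) ` (compset a \<times> R \<alpha>)" using \<beta>s by auto
  qed
next
  show "(\<lambda>(\<gamma>,\<beta>s). \<gamma>#\<beta>s) ` (compset a \<times> R \<alpha>) \<subseteq> R (a#\<alpha>)"
    by (auto simp: R_def compset_def nth_Cons split: nat.split)
qed

lemma R_finite: "finite (R \<alpha>)"
  by (induction \<alpha>) (simp_all add: R_Nil R_Cons compset_finite)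

lemma sum_R_Cons: "(\<Sum>\<beta>s\<in>R (a#\<alpha>). f \<beta>s) = (\<Sum>\<gamma>\<in>compset a. \<Sum>\<beta>s\<in>R \<alpha>. f (\<gamma>#\<beta>s))"
proof -
  have inj: "inj_on (\<lambda>(\<gamma>,\<beta>s). \<gamma>#\<beta>s) (compset a \<times> R \<alpha>)" by (auto simp: inj_on_def)
  show ?thesis unfolding R_Cons sum.reindex[OF inj]
    by (simp only: sum.cartesian_product split_def comp_def)
qed

lemma comp_prefix_unique:
  assumes "is_comp_of \<gamma> a" "is_comp_of \<gamma>' a" "\<gamma> @ u = \<gamma>' @ u'"
  shows "\<gamma> = \<gamma>' \<and> u = u'"
  using assms
proof (induction \<gamma> arbitrary: \<gamma>' a)
  case Nil
  then have "a = 0" by (simp add: is_comp_of_def)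
  then have "\<gamma>' = []" using Nil.prems(2) by (cases \<gamma>') (auto simp: is_comp_of_def)
  then show ?case using Nil by simp
next
  case (Cons c g)
  then have "a > 0" by (auto simp: is_comp_of_def)
  then obtain c' g' where \<gamma>': "\<gamma>' = c' # g'" using Cons.prems(2) by (cases \<gamma>') (auto simp: is_comp_of_def)
  then have cc: "c = c'" "g @ u = g' @ u'" using Cons.prems(3) by auto
  have "is_comp_of g (a - c)" "is_comp_of g' (a - c)"
    using Cons.prems(1,2) \<gamma>' cc by (auto simp: is_comp_of_def)
  then show ?case using Cons.IH[OF _ _ cc(2)] \<gamma>' cc by auto
qed

lemma concat_inj: "inj_on concat (R \<alpha>)"
proof (induction \<alpha>)
  case Nil then show ?case by (simp add: R_Nil)
next
  case (Cons a \<alpha>)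
  show ?case
  proof (rule inj_onI)
    fix x y assume x: "x \<in> R (a#\<alpha>)" and y: "y \<in> R (a#\<alpha>)" and e: "concat x = concat y"
    obtain \<gamma> r where xx: "x = \<gamma>#r" "\<gamma> \<in> compset a" "r \<in> R \<alpha>" using x unfolding R_Cons by auto
    obtain \<gamma>' r' where yy: "y = \<gamma>'#r'" "\<gamma>' \<in> compset a" "r' \<in> R \<alpha>" using y unfolding R_Cons by auto
    have "\<gamma> = \<gamma>' \<and> concat r = concat r'"
      by (rule comp_prefix_unique) (use xx yy e in \<open>auto simp: compset_def\<close>)
    then show "x = y" using Cons.IH xx yy by (auto dest: inj_onD)
  qed
qed

lemma refinements_R: "refinements \<alpha> = concat ` R \<alpha>"
  by (auto simp: refinements_def R_def)

lemma onF_R: "onF \<phi> \<alpha> = (\<Sum>\<beta>s\<in>R \<alpha>. \<phi> (concat \<beta>s))"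
  unfolding onF_def refinements_R by (simp add: sum.reindex[OF concat_inj])

lemma R_props: assumes "\<beta>s \<in> R \<alpha>" "is_comp \<alpha>"
  shows "is_comp (concat \<beta>s) \<and> (\<alpha> \<noteq> [] \<longrightarrow> concat \<beta>s \<noteq> [])"
  using assms
proof (induction \<alpha> arbitrary: \<beta>s)
  case Nil then show ?case by (simp add: R_Nil)
next
  case (Cons a \<alpha>)
  obtain \<gamma> r where xx: "\<beta>s = \<gamma>#r" "\<gamma> \<in> compset a" "r \<in> R \<alpha>" using Cons.prems(1) unfolding R_Cons by auto
  have "\<gamma> \<noteq> []" using compset_nonempty[OF xx(2)] Cons.prems(2) by simp
  moreover have "is_comp \<gamma>" using xx(2) by (simp add: compset_def is_comp_of_def)
  ultimately show ?case using Cons.IH[OF xx(3)] Cons.prems(2) xx(1) by simp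
qed


definition Sidx :: "nat list \<Rightarrow> nat set" where
  "Sidx \<alpha> = {i. i + 1 < length \<alpha> \<and> 1 < \<alpha>!i}"

lemma Sidx_finite: "finite (Sidx \<alpha>)"
  by (rule finite_subset[of _ "{..<length \<alpha>}"]) (auto simp: Sidx_def)

lemma p_minus_Sidx: "p_minus \<alpha> = card (Sidx \<alpha>)" by (simp add: p_minus_def Sidx_def)

lemma p_minus_single: "p_minus [a] = 0" by (simp add: p_minus_def)
lemma p_minus_Nil: "p_minus [] = 0" by (simp add: p_minus_def)
lemma p_plus_single: "p_plus [a] = 0" by (simp add: p_plus_def)
lemma p_plus_Nil: "p_plus [] = 0" by (simp add: p_plus_def)

lemma p_minus_Cons: assumes "\<alpha> \<noteq> []"
  shows "p_minus (a#\<alpha>) = (if 1 < a then 1 else 0) + p_minus \<alpha>"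
proof -
  have e: "Sidx (a#\<alpha>) = (if 1 < a then {0} else {}) \<union> Suc ` Sidx \<alpha>"
  proof (rule set_eqI)
    fix i show "i \<in> Sidx (a#\<alpha>) \<longleftrightarrow> i \<in> (if 1 < a then {0} else {}) \<union> Suc ` Sidx \<alpha>"
      using assms by (cases i) (auto simp: Sidx_def)
  qed
  have "0 \<notin> Suc ` Sidx \<alpha>" by auto
  then show ?thesis unfolding p_minus_Sidx e
    by (simp add: card_image Sidx_finite)
qed

lemma p_plus_Cons: assumes "\<alpha> \<noteq> []"
  shows "p_plus (a#\<alpha>) = 1 + p_minus \<alpha>"
proof -
  have e: "{i. 0 < i \<and> i + 1 < length (a#\<alpha>) \<and> 1 < (a#\<alpha>)!i} = Suc ` Sidx \<alpha>"
  proof (rule set_eqI)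
    fix i show "i \<in> {i. 0 < i \<and> i + 1 < length (a#\<alpha>) \<and> 1 < (a#\<alpha>)!i} \<longleftrightarrow> i \<in> Suc ` Sidx \<alpha>"
      by (cases i) (auto simp: Sidx_def)
  qed
  show ?thesis using assms unfolding p_plus_def e p_minus_Sidx by (simp add: card_image)
qed

lemma xP_pow: "(monom (1::'k::field) 1)^k = monom 1 k"
  by (simp add: monom_power)

lemma M1: assumes "is_comp \<alpha>" "\<alpha> \<noteq> []"
  shows "(\<Sum>\<beta>s\<in>R \<alpha>. if concat \<beta>s \<noteq> [] \<and> odd (last (concat \<beta>s)) then W (concat \<beta>s) else 0)
      = monom (1::'k::field) (sum_list \<alpha> - 2 * p_minus \<alpha>) * (monom 1 2 - 1)^(p_minus \<alpha>)
    \<and> 2 * p_minus \<alpha> + last \<alpha> \<le> sum_list \<alpha>"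
  using assms
proof (induction \<alpha>)
  case Nil then show ?case by simp
next
  case (Cons a \<alpha>)
  have a0: "0 < a" using Cons.prems by simp
  show ?case
  proof (cases "\<alpha> = []")
    case True
    have "(\<Sum>\<beta>s\<in>R [a]. if concat \<beta>s \<noteq> [] \<and> odd (last (concat \<beta>s)) then (W (concat \<beta>s) :: 'k poly) else 0)
        = (\<Sum>\<gamma>\<in>compset a. if \<gamma> \<noteq> [] \<and> odd (last \<gamma>) then W \<gamma> else 0)"
      unfolding sum_R_Cons R_Nil by (simp cong: if_cong)
    also have "\<dots> = monom 1 a" by (simp add: Qsum_closed[OF a0] monom_power)
    finally show ?thesis using True by (simp add: p_minus_single)
  next
    case False
    have ca: "is_comp \<alpha>" using Cons.prems by simp
    obtain IH1 IH2 where IH: "(\<Sum>\<beta>s\<in>R \<alpha>. if concat \<beta>s \<noteq> [] \<and> odd (last (concat \<beta>s)) then W (concat \<beta>s) else 0)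
      = monom (1::'k) (sum_list \<alpha> - 2 * p_minus \<alpha>) * (monom 1 2 - 1)^(p_minus \<alpha>)"
      and bnd: "2 * p_minus \<alpha> + last \<alpha> \<le> sum_list \<alpha>"
      using Cons.IH[OF ca False] by blast
    have "(\<Sum>\<beta>s\<in>R (a#\<alpha>). if concat \<beta>s \<noteq> [] \<and> odd (last (concat \<beta>s)) then (W (concat \<beta>s) :: 'k poly) else 0)
      = (\<Sum>\<gamma>\<in>compset a. \<Sum>\<beta>s\<in>R \<alpha>. W \<gamma> * (if concat \<beta>s \<noteq> [] \<and> odd (last (concat \<beta>s)) then W (concat \<beta>s) else 0))"
      unfolding sum_R_Cons
    proof (intro sum.cong refl)
      fix \<gamma> \<beta>s assume "\<beta>s \<in> R \<alpha>"
      then have ne: "concat \<beta>s \<noteq> []" using R_props[OF _ ca] False by blast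
      then show "(if concat (\<gamma>#\<beta>s) \<noteq> [] \<and> odd (last (concat (\<gamma>#\<beta>s))) then (W (concat (\<gamma>#\<beta>s)) :: 'k poly) else 0) =
        W \<gamma> * (if concat \<beta>s \<noteq> [] \<and> odd (last (concat \<beta>s)) then W (concat \<beta>s) else 0)"
        by (simp add: W_append)
    qed
    also have "\<dots> = Psum a * (\<Sum>\<beta>s\<in>R \<alpha>. if concat \<beta>s \<noteq> [] \<and> odd (last (concat \<beta>s)) then W (concat \<beta>s) else 0)"
      by (simp only: Psum_def sum_product)
    also note IH
    finally have S: "(\<Sum>\<beta>s\<in>R (a#\<alpha>). if concat \<beta>s \<noteq> [] \<and> odd (last (concat \<beta>s)) then (W (concat \<beta>s) :: 'k poly) else 0)
      = Psum a * (monom (1::'k) (sum_list \<alpha> - 2 * p_minus \<alpha>) * (monom 1 2 - 1)^(p_minus \<alpha>))" .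
    have lastpos: "last \<alpha> > 0" using ca False by (simp add: is_comp_def)
    show ?thesis
    proof (cases "a = 1")
      case True
      have "Psum a * (monom (1::'k) (sum_list \<alpha> - 2 * p_minus \<alpha>) * (monom 1 2 - 1)^(p_minus \<alpha>))
          = monom 1 (sum_list (a#\<alpha>) - 2 * p_minus (a#\<alpha>)) * (monom 1 2 - 1)^(p_minus (a#\<alpha>))"
      proof -
        have e: "Suc (sum_list \<alpha> - 2 * p_minus \<alpha>) = Suc (sum_list \<alpha>) - 2 * p_minus \<alpha>" using bnd by simp
        show ?thesis using True bnd False
          by (simp add: Psum_closed p_minus_Cons monom_power mult_monom mult.assoc[symmetric] e)
      qed
      then show ?thesis using S True bnd False by (simp add: p_minus_Cons)
    next
      case False2: False
      then have a2: "a \<ge> 2" using a0 by simp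
      have P: "Psum a = monom (1::'k) (a-2) * (monom 1 2 - 1)"
      proof -
        have "Psum a = monom (1::'k) a - monom 1 (a-2)" using False2 a0 by (simp add: Psum_closed monom_power)
        also have "monom (1::'k) a = monom 1 (a-2) * monom 1 2"
        proof -
          have "a = (a - 2) + 2" using a2 by simp
          then show ?thesis by (metis mult_monom mult_1)
        qed
        finally show ?thesis by (simp add: algebra_simps)
      qed
      have "Psum a * (monom (1::'k) (sum_list \<alpha> - 2 * p_minus \<alpha>) * (monom 1 2 - 1)^(p_minus \<alpha>))
          = monom 1 (a - 2 + (sum_list \<alpha> - 2 * p_minus \<alpha>)) * (monom 1 2 - 1)^(Suc (p_minus \<alpha>))"
        unfolding P by (simp add: mult_monom algebra_simps)
      also have "a - 2 + (sum_list \<alpha> - 2 * p_minus \<alpha>) = sum_list (a#\<alpha>) - 2 * p_minus (a#\<alpha>)"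
        using a2 bnd False by (simp add: p_minus_Cons)
      finally show ?thesis using S a2 bnd False by (simp add: p_minus_Cons)
    qed
  qed
qed


lemma mM_concat: assumes "\<beta>s \<in> R \<alpha>" "is_comp \<alpha>" "\<alpha> \<noteq> []"
  shows "mM (concat \<beta>s) = Lf (if concat \<beta>s \<noteq> [] \<and> odd (last (concat \<beta>s)) then W (concat \<beta>s) else (0::'k::field poly))"
proof -
  have h: "is_comp (concat \<beta>s)" "concat \<beta>s \<noteq> []" using R_props[OF assms(1,2)] assms(3) by auto
  show ?thesis
  proof (cases "odd (last (concat \<beta>s))")
    case True
    then show ?thesis unfolding mM_L using h by (simp only: if_True if_False simp_thms)
  next
    case False
    then show ?thesis unfolding mM_L using h by (simp only: if_True if_False simp_thms Lf_0)
  qed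
qed

lemma onF_mM: assumes two: "(2::'k::field) \<noteq> 0" and c: "is_comp \<alpha>" and ne: "\<alpha> \<noteq> []"
  shows "onF (mM :: nat list \<Rightarrow> 'k) \<alpha> = Dk (p_minus \<alpha>) ((sum_list \<alpha> - 2 * p_minus \<alpha>) div 2)"
proof -
  have "onF (mM :: nat list \<Rightarrow> 'k) \<alpha> = (\<Sum>\<beta>s\<in>R \<alpha>. Lf (if concat \<beta>s \<noteq> [] \<and> odd (last (concat \<beta>s)) then W (concat \<beta>s) else (0::'k poly)))"
    unfolding onF_R by (rule sum.cong) (simp_all add: mM_concat[OF _ c ne])
  also have "\<dots> = Lf (\<Sum>\<beta>s\<in>R \<alpha>. if concat \<beta>s \<noteq> [] \<and> odd (last (concat \<beta>s)) then W (concat \<beta>s) else (0::'k poly))"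
    by (simp only: Lf_sum)
  also have "\<dots> = Lf (monom (1::'k) (sum_list \<alpha> - 2 * p_minus \<alpha>) * (monom 1 2 - 1)^(p_minus \<alpha>))"
    by (simp only: conjunct1[OF M1[OF c ne]])
  also have "\<dots> = Dk (p_minus \<alpha>) ((sum_list \<alpha> - 2 * p_minus \<alpha>) div 2)" by (rule Lf_shift[OF two])
  finally show ?thesis .
qed

definition Rk :: "nat \<Rightarrow> 'k::field" where
  "Rk a = (\<Sum>\<gamma>\<in>compset a. (-1)^(hd \<gamma>) * mM (tl \<gamma>))"

lemma Msum: assumes "0 < a" shows "(\<Sum>\<gamma>\<in>compset a. mM \<gamma>) = (cc a :: 'k::field)"
proof -
  have "(\<Sum>\<gamma>\<in>compset a. (mM \<gamma> :: 'k)) = (\<Sum>\<gamma>\<in>compset a. Lf (if \<gamma> \<noteq> [] \<and> odd (last \<gamma>) then W \<gamma> else 0))"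
  proof (rule sum.cong)
    fix \<gamma> assume g: "\<gamma> \<in> compset a"
    then have "is_comp \<gamma>" "\<gamma> \<noteq> []" using compset_nonempty[OF g assms] by (auto simp: compset_def is_comp_of_def)
    then show "(mM \<gamma> :: 'k) = Lf (if \<gamma> \<noteq> [] \<and> odd (last \<gamma>) then W \<gamma> else 0)" by (simp add: mM_L)
  qed simp
  also have "\<dots> = Lf (\<Sum>\<gamma>\<in>compset a. if \<gamma> \<noteq> [] \<and> odd (last \<gamma>) then W \<gamma> else 0)" by (simp only: Lf_sum)
  also have "\<dots> = cc a" by (simp add: Qsum_closed[OF assms] monom_power Lf_monom)
  finally show ?thesis .
qed

lemma Rk_Suc: assumes "0 < a" shows "Rk (Suc a) = - cc a - (Rk a :: 'k::field)"
proof -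
  have "Rk (Suc a) = (\<Sum>\<gamma>\<in>compset a. (-1)^1 * (mM \<gamma> :: 'k)) + (\<Sum>\<gamma>\<in>compset a. (-1)^(hd (inc \<gamma>)) * mM (tl (inc \<gamma>)))"
    unfolding Rk_def sum_compset_Suc[OF assms] by simp
  also have "(\<Sum>\<gamma>\<in>compset a. (-1)^(hd (inc \<gamma>)) * (mM (tl (inc \<gamma>)) :: 'k)) = - Rk a"
    unfolding Rk_def sum_negf[symmetric]
  proof (rule sum.cong)
    fix \<gamma> assume "\<gamma> \<in> compset a"
    then have "\<gamma> \<noteq> []" using compset_nonempty assms by blast
    then show "(-1)^(hd (inc \<gamma>)) * (mM (tl (inc \<gamma>)) :: 'k) = - ((-1)^(hd \<gamma>) * mM (tl \<gamma>))"
      using inc_hd_tl by simp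
  qed simp
  finally show ?thesis using Msum[OF assms] by (simp add: sum_negf)
qed

lemma cc_Suc_even: "even n \<Longrightarrow> cc (Suc n) = cc n"
  by (simp add: cc_def)

lemma Rk_closed: "cc (Suc n) + Rk (Suc n) = (if even (Suc n) then cc (Suc n) else (0::'k::field))"
proof (induction n)
  case 0
  have "Rk (Suc 0) = (-1 :: 'k)" by (simp add: Rk_def compset_Suc0 mM_def cc_0)
  moreover have "cc (Suc 0) = (1::'k)" by (simp add: cc_def)
  ultimately show ?case by simp
next
  case (Suc n)
  have "cc (Suc (Suc n)) + Rk (Suc (Suc n)) = cc (Suc (Suc n)) - cc (Suc n) - (Rk (Suc n) :: 'k)"
    by (simp add: Rk_Suc)
  also have "\<dots> = cc (Suc (Suc n)) - (if even (Suc n) then cc (Suc n) else 0)"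
    using Suc.IH by (simp add: algebra_simps)
  finally show ?case by (auto simp: cc_Suc_even)
qed

lemma onF_p0_single: assumes two: "(2::'k::field) \<noteq> 0" and a: "0 < a"
  shows "onF (p0 :: nat list \<Rightarrow> 'k) [a] = (if even a then cc a else 0)"
proof -
  have "onF (p0 :: nat list \<Rightarrow> 'k) [a] = (\<Sum>\<gamma>\<in>compset a. p0 \<gamma>)"
    unfolding onF_R sum_R_Cons R_Nil by simp
  also have "\<dots> = (\<Sum>\<gamma>\<in>compset a. mM \<gamma> + (-1)^(hd \<gamma>) * mM (tl \<gamma>))"
  proof (rule sum.cong)
    fix \<gamma> assume g: "\<gamma> \<in> compset a"
    then obtain c r where "\<gamma> = c # r" using compset_nonempty[OF g a] by (cases \<gamma>) auto
    moreover have "0 < c" using g \<open>\<gamma> = c # r\<close> by (simp add: compset_def is_comp_of_def)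
    ultimately show "(p0 :: nat list \<Rightarrow> 'k) \<gamma> = mM \<gamma> + (-1)^(hd \<gamma>) * mM (tl \<gamma>)"
      by (simp add: p0_Cons[OF two])
  qed simp
  also have "\<dots> = cc a + Rk a" by (simp add: sum.distrib Msum[OF a] Rk_def)
  also have "\<dots> = (if even a then cc a else 0)"
  proof -
    obtain n where "a = Suc n" using a by (cases a) auto
    then show ?thesis using Rk_closed[of n, where 'k='k] by (simp only:)
  qed
  finally show ?thesis .
qed


lemma onF_p0_multi: assumes two: "(2::'k::field) \<noteq> 0" and c: "is_comp (a#\<alpha>)" and ne: "\<alpha> \<noteq> []"
  shows "onF (p0 :: nat list \<Rightarrow> 'k) (a#\<alpha>) = Lf ((xP - 1) * xP^(a-1) *
      (monom (1::'k) (sum_list \<alpha> - 2 * p_minus \<alpha>) * (monom 1 2 - 1)^(p_minus \<alpha>)))"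
proof -
  have a: "0 < a" and ca: "is_comp \<alpha>" using c by auto
  let ?X = "\<lambda>\<gamma>. W \<gamma> + (if odd (hd \<gamma>) then - W (tl \<gamma>) else (W (tl \<gamma>) :: 'k poly))"
  let ?Y = "\<lambda>\<beta>s. if concat \<beta>s \<noteq> [] \<and> odd (last (concat \<beta>s)) then W (concat \<beta>s) else (0 :: 'k poly)"
  have "onF (p0 :: nat list \<Rightarrow> 'k) (a#\<alpha>) = (\<Sum>\<gamma>\<in>compset a. \<Sum>\<beta>s\<in>R \<alpha>. p0 (\<gamma> @ concat \<beta>s))"
    unfolding onF_R sum_R_Cons by simp
  also have "\<dots> = (\<Sum>\<gamma>\<in>compset a. \<Sum>\<beta>s\<in>R \<alpha>. Lf (?X \<gamma> * ?Y \<beta>s))"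
  proof (intro sum.cong refl)
    fix \<gamma> \<beta>s assume g: "\<gamma> \<in> compset a" and b: "\<beta>s \<in> R \<alpha>"
    obtain x r where \<gamma>: "\<gamma> = x # r" using compset_nonempty[OF g a] by (cases \<gamma>) auto
    have x0: "0 < x" and cr: "is_comp r" using g \<gamma> by (auto simp: compset_def is_comp_of_def)
    obtain B where Bdef: "B = concat \<beta>s" by simp
    have cB: "is_comp B" and nB: "B \<noteq> []" using R_props[OF b ca] ne Bdef by auto
    have lB: "last (x # (r @ B)) = last B" "last (r @ B) = last B" using nB by auto
    have m1: "(mM (x # (r @ B)) :: 'k) = (if odd (last B) then Lf (W (x#r) * W B) else 0)"
      using cB cr x0 nB lB by (simp add: mM_L W_append[of "x#r", simplified])
    have m2: "(mM (r @ B) :: 'k) = (if odd (last B) then Lf (W r * W B) else 0)"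
      using cB cr nB lB by (simp add: mM_L W_append)
    have Y: "?Y \<beta>s = (if odd (last B) then W B else 0)" using nB Bdef by simp
    have "(p0 :: nat list \<Rightarrow> 'k) (\<gamma> @ B) = mM (x # (r @ B)) + (-1)^x * mM (r @ B)"
      unfolding \<gamma> using x0 by (simp add: p0_Cons[OF two])
    also have "\<dots> = Lf (?X \<gamma> * ?Y \<beta>s)"
    proof (cases "odd (last B)")
      case True
      have "Lf (?X \<gamma> * ?Y \<beta>s) = Lf (W (x#r) * W B + (if odd x then - (W r * W B) else W r * W B))"
        using True unfolding Y \<gamma> by (simp add: algebra_simps)
      also have "\<dots> = Lf (W (x#r) * W B) + (-1)^x * Lf (W r * W B)"
        by (simp add: Lf_add Lf_uminus)
      finally show ?thesis using True m1 m2 \<gamma> by simp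
    next
      case False
      then show ?thesis using m1 m2 unfolding Y by simp
    qed
    finally show "(p0 :: nat list \<Rightarrow> 'k) (\<gamma> @ concat \<beta>s) = Lf (?X \<gamma> * ?Y \<beta>s)" unfolding Bdef .
  qed
  also have "\<dots> = Lf (\<Sum>\<gamma>\<in>compset a. \<Sum>\<beta>s\<in>R \<alpha>. ?X \<gamma> * ?Y \<beta>s)" by (simp only: Lf_sum)
  also have "(\<Sum>\<gamma>\<in>compset a. \<Sum>\<beta>s\<in>R \<alpha>. ?X \<gamma> * ?Y \<beta>s) = (\<Sum>\<gamma>\<in>compset a. ?X \<gamma>) * (\<Sum>\<beta>s\<in>R \<alpha>. ?Y \<beta>s)"
    by (simp only: sum_product)
  also have "(\<Sum>\<gamma>\<in>compset a. ?X \<gamma>) = (xP - 1) * xP^(a-1)" by (rule W2sum_closed[OF a])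
  also have "(\<Sum>\<beta>s\<in>R \<alpha>. ?Y \<beta>s) = monom (1::'k) (sum_list \<alpha> - 2 * p_minus \<alpha>) * (monom 1 2 - 1)^(p_minus \<alpha>)"
    by (rule conjunct1[OF M1[OF ca ne]])
  finally show ?thesis .
qed


lemma div2_a: "0 < (x::nat) \<Longrightarrow> (2*x - 1) div 2 = x - 1"
proof -
  assume "0 < x"
  then have "2*x - 1 = 2*(x-1) + 1" by arith
  then show ?thesis by simp
qed

lemma arith_even: assumes "even (n::nat)" "a + s' = n" "2*q + l \<le> s'" "0 < l" "0 < a"
  shows "(a + (s' - 2*q)) div 2 = Suc ((a - 1 + (s' - 2*q)) div 2)"
    "(a - 1 + (s' - 2*q)) div 2 = n div 2 - Suc q"
    "2 * (Suc q + (a - 1 + (s' - 2*q)) div 2) = n"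
proof -
  obtain t where n: "n = 2*t" using assms(1) by blast
  have e: "a + (s' - 2*q) = 2*(t-q)" using assms(2-5) n by arith
  have tq: "0 < t - q" using assms(2-5) n by arith
  have e2: "a - 1 + (s' - 2*q) = 2*(t-q) - 1" using assms(2-5) n by arith
  have d: "(a - 1 + (s' - 2*q)) div 2 = t - q - 1" unfolding e2 using div2_a[OF tq] .
  show "(a + (s' - 2*q)) div 2 = Suc ((a - 1 + (s' - 2*q)) div 2)" unfolding d e using tq by simp
  show "(a - 1 + (s' - 2*q)) div 2 = n div 2 - Suc q" unfolding d n by simp
  show "2 * (Suc q + (a - 1 + (s' - 2*q)) div 2) = n" unfolding d n using tq by simp
qed

lemma arith_odd: assumes "odd (n::nat)" "a + s' = n" "2*q + l \<le> s'" "0 < l" "0 < a"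
  shows "(a + (s' - 2*q)) div 2 = (a - 1 + (s' - 2*q)) div 2"
proof -
  obtain t where n: "n = 2*t + 1" using assms(1) oddE by blast
  have e: "a + (s' - 2*q) = 2*(t-q) + 1" using assms(2-5) n by arith
  have e2: "a - 1 + (s' - 2*q) = 2*(t-q)" using assms(2-5) n by arith
  show ?thesis unfolding e e2 by simp
qed

lemma arith_p1: assumes "2 * (p::nat) \<le> n" shows "(n - 2 * p) div 2 = n div 2 - p"
proof (cases "even n")
  case True
  then obtain t where n: "n = 2*t" by blast
  have "n - 2*p = 2*(t-p)" using assms n by arith
  then show ?thesis using n by simp
next
  case False
  then obtain t where n: "n = 2*t+1" using oddE by blast
  have "n - 2*p = 2*(t-p) + 1" using assms n by arith
  then show ?thesis using n by simp
qed

lemma arith_p2: assumes "2 * (p::nat) \<le> n" shows "p + (n div 2 - p) = n div 2"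
proof -
  have "2 * p \<le> 2 * (n div 2) + n mod 2" using assms by simp
  moreover have "n mod 2 < 2" by simp
  ultimately have "p \<le> n div 2" by arith
  then show ?thesis by simp
qed

lemma superC_00: "superC 0 0 = 1" by (simp add: superC_0)

lemma part1: assumes two: "(2::'k::field) \<noteq> 0" and comp: "is_comp_of \<alpha> n"
  shows "onF (mM :: nat list \<Rightarrow> 'k) \<alpha> = (-1) ^ p_minus \<alpha> / 2 ^ (2 * (n div 2))
             * of_nat (superC (p_minus \<alpha>) (n div 2 - p_minus \<alpha>))"
proof (cases "\<alpha> = []")
  case True
  then have "n = 0" using comp by (simp add: is_comp_of_def)
  have "onF (mM :: nat list \<Rightarrow> 'k) [] = 1" unfolding onF_R R_Nil by (simp add: mM_def cc_0)
  then show ?thesis using True \<open>n = 0\<close> by (simp add: p_minus_Nil superC_00)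
next
  case False
  have c: "is_comp \<alpha>" and s: "sum_list \<alpha> = n" using comp by (auto simp: is_comp_of_def)
  let ?p = "p_minus \<alpha>"
  have bnd: "2 * ?p \<le> n" using conjunct2[OF M1[OF c False, where 'k='k]] s by simp
  have e1: "(n - 2 * ?p) div 2 = n div 2 - ?p" using bnd by (rule arith_p1)
  have e2: "?p + (n div 2 - ?p) = n div 2" using bnd by (rule arith_p2)
  have "onF (mM :: nat list \<Rightarrow> 'k) \<alpha> = Dk ?p (n div 2 - ?p)"
    using onF_mM[OF two c False] s e1 by simp
  also have "\<dots> = (-1) ^ ?p / 2 ^ (2 * (n div 2)) * of_nat (superC ?p (n div 2 - ?p))"
    unfolding Dk_def e2 by simp
  finally show ?thesis .
qed

lemma part2: assumes two: "(2::'k::field) \<noteq> 0" and comp: "is_comp_of \<alpha> n"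
  shows "onF (p0 :: nat list \<Rightarrow> 'k) \<alpha> = (if even n then (-1) ^ p_plus \<alpha> / 2 ^ n
                 * of_nat (superC (p_plus \<alpha>) (n div 2 - p_plus \<alpha>))
            else 0)"
proof (cases \<alpha>)
  case Nil
  then have "n = 0" using comp by (simp add: is_comp_of_def)
  have "onF (p0 :: nat list \<Rightarrow> 'k) [] = 1" unfolding onF_R R_Nil by (simp add: p0_Nil)
  then show ?thesis using Nil \<open>n = 0\<close> by (simp add: p_plus_Nil superC_00)
next
  case (Cons a \<alpha>')
  have c: "is_comp (a#\<alpha>')" and s: "a + sum_list \<alpha>' = n" using comp Cons by (auto simp: is_comp_of_def)
  have a0: "0 < a" using c by simp
  show ?thesis
  proof (cases "\<alpha>' = []")
    case True
    then have na: "n = a" using s by simp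
    have "onF (p0 :: nat list \<Rightarrow> 'k) [a] = (if even a then cc a else 0)" by (rule onF_p0_single[OF two a0])
    moreover have "even a \<Longrightarrow> cc a = (1::'k) / 2 ^ a * of_nat (superC 0 (a div 2))"
    proof -
      assume "even a"
      then have "2 * (a div 2) = a" by simp
      then show "cc a = (1::'k) / 2 ^ a * of_nat (superC 0 (a div 2))"
        by (simp add: cc_def superC_0)
    qed
    ultimately show ?thesis unfolding Cons True na p_plus_single by simp
  next
    case False
    have ca': "is_comp \<alpha>'" using c by simp
    let ?q = "p_minus \<alpha>'"
    let ?N = "sum_list \<alpha>' - 2 * ?q"
    have bnd: "2 * ?q + last \<alpha>' \<le> sum_list \<alpha>'" using conjunct2[OF M1[OF ca' False, where 'k='k]] .
    have lpos: "0 < last \<alpha>'" using ca' False by (simp add: is_comp_def)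
    have pp: "p_plus \<alpha> = Suc ?q" using Cons p_plus_Cons[OF False] by simp
    have "(xP - 1) * xP^(a-1) * (monom (1::'k) ?N * (monom 1 2 - 1)^?q)
        = monom 1 (a + ?N) * (monom 1 2 - 1)^?q - monom 1 (a - 1 + ?N) * (monom 1 2 - 1)^?q"
    proof -
      have "(xP - 1) * xP^(a-1) = monom (1::'k) a - monom 1 (a-1)"
      proof -
        have "monom (1::'k) 1 * monom 1 (a-1) = monom 1 (1 + (a-1))" by (simp only: mult_monom mult_1_left)
        also have "1 + (a-1) = a" using a0 by simp
        finally have m: "monom (1::'k) 1 * monom 1 (a-1) = monom 1 a" .
        have "(xP - 1) * xP^(a-1) = monom (1::'k) 1 * monom 1 (a-1) - monom 1 (a-1)"
          by (simp only: monom_power left_diff_distrib mult_1_left power_one mult_1_right)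
        then show ?thesis by (simp only: m)
      qed
      then have "(xP - 1) * xP^(a-1) * (monom (1::'k) ?N * (monom 1 2 - 1)^?q)
          = (monom 1 a - monom 1 (a-1)) * (monom (1::'k) ?N * (monom 1 2 - 1)^?q)" by (simp only:)
      also have "\<dots> = (monom 1 a * monom (1::'k) ?N) * (monom 1 2 - 1)^?q - (monom 1 (a-1) * monom 1 ?N) * (monom 1 2 - 1)^?q"
        by (simp only: left_diff_distrib mult.assoc)
      also have "\<dots> = monom 1 (a + ?N) * (monom 1 2 - 1)^?q - monom 1 (a - 1 + ?N) * (monom 1 2 - 1)^?q"
        by (simp only: mult_monom mult_1_left)
      finally show ?thesis .
    qed
    note X = this
    have "onF (p0 :: nat list \<Rightarrow> 'k) \<alpha> = Lf ((xP - 1) * xP^(a-1) * (monom (1::'k) ?N * (monom 1 2 - 1)^?q))"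
      unfolding Cons by (rule onF_p0_multi[OF two c False])
    also have "\<dots> = Lf (monom 1 (a + ?N) * (monom 1 2 - 1)^?q) - Lf (monom 1 (a - 1 + ?N) * (monom 1 2 - 1)^?q)"
      by (simp only: X Lf_diff)
    also have "\<dots> = Dk ?q ((a + ?N) div 2) - Dk ?q ((a - 1 + ?N) div 2)"
      by (simp only: Lf_shift[OF two])
    finally have "onF (p0 :: nat list \<Rightarrow> 'k) \<alpha> = Dk ?q ((a + ?N) div 2) - Dk ?q ((a - 1 + ?N) div 2)" .
    also have "\<dots> = (if even n then (-1) ^ p_plus \<alpha> / 2 ^ n
                 * of_nat (superC (p_plus \<alpha>) (n div 2 - p_plus \<alpha>)) else 0)"
    proof (cases "even n")
      case True
      define r where "r = (a - 1 + ?N) div 2"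
      have r1: "(a + ?N) div 2 = Suc r" unfolding r_def by (rule arith_even(1)[OF True s bnd lpos a0])
      have r2: "r = n div 2 - Suc ?q" unfolding r_def by (rule arith_even(2)[OF True s bnd lpos a0])
      have r3: "2 * (Suc ?q + r) = n" unfolding r_def by (rule arith_even(3)[OF True s bnd lpos a0])
      have "Dk ?q ((a + ?N) div 2) - Dk ?q ((a - 1 + ?N) div 2) = (Dk (Suc ?q) r :: 'k)"
        unfolding r1 r_def[symmetric] by (rule Dk_rec[OF two])
      also have "\<dots> = (-1) ^ p_plus \<alpha> / 2 ^ n * of_nat (superC (p_plus \<alpha>) (n div 2 - p_plus \<alpha>))"
      proof -
        have "(Dk (Suc ?q) r :: 'k) = (-1)^(Suc ?q) * of_nat (superC (Suc ?q) r) / 2^n"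
          by (simp only: Dk_def r3)
        then show ?thesis by (simp add: pp r2)
      qed
      finally show ?thesis using True by simp
    next
      case False
      have "(a + ?N) div 2 = (a - 1 + ?N) div 2" by (rule arith_odd[OF False s bnd lpos a0])
      then show ?thesis using False by simp
    qed
    finally show ?thesis .
  qed
qed

theorem theorem5p1:
  fixes \<alpha> :: "nat list" and n :: nat
  assumes char: "(2::'k::field) \<noteq> 0"
    and comp: "is_comp_of \<alpha> n"
  shows "onF (odd_part (zeta :: nat list \<Rightarrow> 'k)) \<alpha> =
           (-1) ^ p_minus \<alpha> / 2 ^ (2 * (n div 2))
             * of_nat (superC (p_minus \<alpha>) (n div 2 - p_minus \<alpha>))
         \<and> onF (even_part (zeta :: nat list \<Rightarrow> 'k)) \<alpha> =
           (if even n then (-1) ^ p_plus \<alpha> / 2 ^ n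
                 * of_nat (superC (p_plus \<alpha>) (n div 2 - p_plus \<alpha>))
            else 0)"
proof -
  have o: "odd_part (zeta :: nat list \<Rightarrow> 'k) = mM" by (simp only: parts(1)[OF char] m0_eq[OF char])
  have e: "even_part (zeta :: nat list \<Rightarrow> 'k) = p0" by (rule parts(2)[OF char])
  show ?thesis unfolding o e by (rule conjI[OF part1[OF char comp] part2[OF char comp]])
qed


end
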